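(* Let $n\ge 2$ and $u\in\mathcal S_n$ with $p(u^{-1})=(\Delta_1,\ldots,\Delta_{n-1})$, and set $\Delta_n$ to be the empty vector. Let $j$ be the number of indices $i\in[n-1]$ for which there is $d\in\mathbb P$ with $\Delta_i=(d,d,\ldots,d)$ ($n-i$ entries) and $\Delta_{i+1}=(d,\ldots,d)$ ($n-i-1$ entries, the same $d$). Then the super-strong Wilf equivalence class of $u$ in $\mathcal S_n$ has exactly $2^j$ elements.
   Context: $\mathbb P$ is the set of positive integers, $\mathbb P^*$ the set of finite words over $\mathbb P$; $|w|$ is the length and $\|w\|=w_1+\cdots+w_n$ the norm of $w=w_1\cdots w_n$. $\mathcal S_n$ is the set of permutations of $[n]=\{1,\ldots,n\}$ written as words. Generalized factor order: for $u,w\in\mathbb P^*$, an index $j$ is an embedding index of $u$ into $w$ if $j+|u|-1\le|w|$ and $u_k\le w_{j+k-1}$ for all $k\in[|u|]$; $Em(u,w)$ is the set of all embedding indices. A bijection $f:\mathbb P^*\to\mathbb P^*$ is weight-preserving if $|f(w)|=|w|$ and $\|f(w)\|=\|w\|$ for all $w$. Words $u,v$ are super-strongly Wilf equivalent ($u\sim_{ss}v$) if there is a weight-preserving bijection $f$ with $Em(u,w)=Em(v,f(w))$ for all $w\in\mathbb P^*$. For a finite set $X=\{x_1<\cdots<x_k\}\subset\mathbb P$, $\Delta(X)=(x_2-x_1,\ldots,x_k-x_{k-1})$; for $s=s_1\cdots s_n\in\mathcal S_n$ and $i\in[n-1]$, $\Delta_i(s)=\Delta(\{s_i,\ldots,s_n\})$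 and $p(s)=(\Delta_1(s),\ldots,\Delta_{n-1}(s))$. (Known fact, usable: for $u,v\in\mathcal S_n$, $u\sim_{ss}v$ iff $p(u^{-1})=p(v^{-1})$.) *)

theory Defs
  imports Main
begin

definition pwords :: "nat list set" where
  "pwords = {w. \<forall>x\<in>set w. 0 < x}"

definition wnorm :: "nat list \<Rightarrow> nat" where
  "wnorm w = sum_list w"

text \<open>Embedding indices (1-based, as in the paper).\<close>
definition Em :: "nat list \<Rightarrow> nat list \<Rightarrow> nat set" where
  "Em u w = {j. 1 \<le> j \<and> j + length u - 1 \<le> length w \<and>
                (\<forall>k\<in>{1..length u}. u ! (k - 1) \<le> w ! (j + k - 2))}"

definition weight_preserving :: "(nat list \<Rightarrow> nat list) \<Rightarrow> bool" where
  "weight_preserving f \<longleftrightarrow> bij_betw f pwords pwords \<and>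
     (\<forall>w\<in>pwords. length (f w) = length w \<and> wnorm (f w) = wnorm w)"

definition ss_wilf :: "nat list \<Rightarrow> nat list \<Rightarrow> bool" where
  "ss_wilf u v \<longleftrightarrow> (\<exists>f. weight_preserving f \<and> (\<forall>w\<in>pwords. Em u w = Em v (f w)))"

definition perms :: "nat \<Rightarrow> nat list set" where
  "perms n = {s. length s = n \<and> distinct s \<and> set s = {1..n}}"

definition perm_inv :: "nat list \<Rightarrow> nat list" where
  "perm_inv s = map (\<lambda>k. (THE i. i < length s \<and> s ! i = k) + 1) [1..<length s + 1]"

definition Delta :: "nat set \<Rightarrow> nat list" where
  "Delta X = (let xs = sorted_list_of_set X in
               map (\<lambda>i. xs ! (i + 1) - xs ! i) [0..<length xs - 1])"

definition Delta_i :: "nat list \<Rightarrow> nat \<Rightarrow> nat list" where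
  "Delta_i s i = Delta (set (drop (i - 1) s))"

definition pvec :: "nat list \<Rightarrow> nat list list" where
  "pvec s = map (Delta_i s) [1..<length s]"

end

theory Submission
  imports Defs
begin

definition tr :: "nat set \<Rightarrow> nat set \<Rightarrow> bool" where
  "tr X Y \<longleftrightarrow> (\<exists>a b. (\<lambda>x. x + a) ` X = (\<lambda>x. x + b) ` Y)"

lemma tr_refl: "tr X X" unfolding tr_def by blast
lemma tr_sym: "tr X Y \<Longrightarrow> tr Y X" unfolding tr_def by metis
lemma tr_trans: assumes "tr X Y" "tr Y Z" shows "tr X Z"
proof -
  obtain a b where 1: "(\<lambda>x. x + a) ` X = (\<lambda>x. x + b) ` Y" using assms(1) unfolding tr_def by blast
  obtain c d where 2: "(\<lambda>x. x + c) ` Y = (\<lambda>x. x + d) ` Z" using assms(2) unfolding tr_def by blast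
  have "(\<lambda>x. x + (a + c)) ` X = (\<lambda>x. x + c) ` ((\<lambda>x. x + a) ` X)" by (simp add: image_image add.assoc)
  also have "\<dots> = (\<lambda>x. x + b) ` ((\<lambda>x. x + c) ` Y)" unfolding 1 by (simp add: image_image algebra_simps)
  also have "\<dots> = (\<lambda>x. x + (b + d)) ` Z" unfolding 2 by (simp add: image_image algebra_simps)
  finally show ?thesis unfolding tr_def by blast
qed

lemma shift_cancel:
  fixes A B :: "nat set"
  assumes "(\<lambda>x. x + a) ` A = (\<lambda>x. x + b) ` B" "b \<le> a"
  shows "B = (\<lambda>x. x + (a - b)) ` A"
proof
  show "B \<subseteq> (\<lambda>x. x + (a - b)) ` A"
  proof
    fix z assume "z \<in> B"
    then have "z + b \<in> (\<lambda>x. x + a) ` A" using assms(1) by blast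
    then obtain w where "w \<in> A" "z + b = w + a" by blast
    moreover have "z = w + (a - b)" using \<open>z + b = w + a\<close> assms(2) by arith
    ultimately show "z \<in> (\<lambda>x. x + (a - b)) ` A" by blast
  qed
  show "(\<lambda>x. x + (a - b)) ` A \<subseteq> B"
  proof
    fix z assume "z \<in> (\<lambda>x. x + (a - b)) ` A"
    then obtain w where w: "w \<in> A" "z = w + (a - b)" by blast
    then have "w + a \<in> (\<lambda>x. x + b) ` B" using assms(1) by blast
    then obtain v where "v \<in> B" "w + a = v + b" by blast
    then show "z \<in> B" using w assms(2) by (metis add.assoc add_diff_cancel_right le_add_diff_inverse2 add_right_cancel)
  qed
qed

lemma shift_core:
  fixes X :: "nat set"
  assumes fin: "finite X" and xX: "x \<in> X" and yX: "y \<in> X" and xy: "x \<noteq> y"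
    and A: "X - {y} = (\<lambda>z. z + \<delta>) ` (X - {x})"
  shows "\<delta> > 0 \<and> (\<exists>N\<ge>1. X = {Min X + i*\<delta> | i. i \<le> N} \<and> x = Min X + N*\<delta> \<and> y = Min X)"
proof -
  have dpos: "\<delta> > 0"
  proof (rule ccontr)
    assume "\<not> \<delta> > 0" then have "\<delta> = 0" by simp
    then have "X - {y} = X - {x}" using A by simp
    then show False using xX xy by blast
  qed
  define m where "m = Min X"
  define M where "M = Max X"
  have ne: "X \<noteq> {}" using xX by blast
  have mX: "m \<in> X" using fin ne m_def by simp
  have MX: "M \<in> X" using fin ne M_def by simp
  have mle: "\<And>z. z \<in> X \<Longrightarrow> m \<le> z" using fin m_def by simp
  have Mge: "\<And>z. z \<in> X \<Longrightarrow> z \<le> M" using fin M_def by simp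
  have ym: "y = m"
  proof (rule ccontr)
    assume "y \<noteq> m"
    then have "m \<in> X - {y}" using mX by blast
    then obtain z where "z \<in> X" "m = z + \<delta>" using A by blast
    then show False using mle dpos by fastforce
  qed
  have xM: "x = M"
  proof (rule ccontr)
    assume "x \<noteq> M"
    then have "M + \<delta> \<in> X - {y}" using A MX by blast
    then show False using Mge dpos by fastforce
  qed
  have up: "\<And>z. z \<in> X \<Longrightarrow> z \<noteq> M \<Longrightarrow> z + \<delta> \<in> X" using A xM by blast
  have down: "\<And>z. z \<in> X \<Longrightarrow> z \<noteq> m \<Longrightarrow> \<exists>z'\<in>X. z = z' + \<delta>"
  proof -
    fix z assume "z \<in> X" "z \<noteq> m"
    then have "z \<in> X - {y}" using ym by blast
    then show "\<exists>z'\<in>X. z = z' + \<delta>" using A by blast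
  qed
  have rep: "\<And>z. z \<in> X \<Longrightarrow> \<exists>i. z = m + i*\<delta>"
  proof -
    fix z show "z \<in> X \<Longrightarrow> \<exists>i. z = m + i*\<delta>"
    proof (induction z rule: less_induct)
      case (less z)
      show ?case
      proof (cases "z = m")
        case True then show ?thesis by (intro exI[of _ 0]) simp
      next
        case False
        then obtain z' where z': "z' \<in> X" "z = z' + \<delta>" using down less.prems by blast
        then have "z' < z" using dpos by simp
        then obtain i where "z' = m + i*\<delta>" using less.IH z' by blast
        then show ?thesis using z' by (intro exI[of _ "Suc i"]) simp
      qed
    qed
  qed
  obtain N where N: "M = m + N*\<delta>" using rep MX by blast
  have N1: "N \<ge> 1"
  proof (rule ccontr)
    assume "\<not> N \<ge> 1" then have "M = m" using N by simp
    then show False using xM ym xy by simp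
  qed
  have inX: "\<And>i. i \<le> N \<Longrightarrow> m + i*\<delta> \<in> X"
  proof -
    fix i show "i \<le> N \<Longrightarrow> m + i*\<delta> \<in> X"
    proof (induction i)
      case 0 then show ?case using mX by simp
    next
      case (Suc i)
      then have "m + i*\<delta> \<in> X" by simp
      moreover have "m + i*\<delta> \<noteq> M" using N Suc.prems dpos by simp
      ultimately have "m + i*\<delta> + \<delta> \<in> X" using up by blast
      then show ?case by (simp add: algebra_simps)
    qed
  qed
  have "X = {m + i*\<delta> | i. i \<le> N}"
  proof
    show "X \<subseteq> {m + i*\<delta> | i. i \<le> N}"
    proof
      fix z assume z: "z \<in> X"
      then obtain i where i: "z = m + i*\<delta>" using rep by blast
      have "i*\<delta> \<le> N*\<delta>" using Mge[OF z] i N by simp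
      then have "i \<le> N" using dpos by simp
      then show "z \<in> {m + i*\<delta> | i. i \<le> N}" using i by blast
    qed
    show "{m + i*\<delta> | i. i \<le> N} \<subseteq> X" using inX by blast
  qed
  then show ?thesis using dpos N1 xM ym N unfolding m_def[symmetric] by blast
qed

definition endAP :: "nat set \<Rightarrow> nat \<Rightarrow> bool" where
  "endAP X x \<longleftrightarrow> (\<exists>d>0. \<exists>N\<ge>1. X = {Min X + i*d | i. i \<le> N} \<and> (x = Min X \<or> x = Min X + N*d))"

lemma tr_remove:
  assumes "finite X" "x \<in> X" "y \<in> X" "x \<noteq> y" "tr (X - {x}) (X - {y})"
  shows "endAP X x \<and> endAP X y"
proof -
  obtain a b where ab: "(\<lambda>z. z + a) ` (X - {x}) = (\<lambda>z. z + b) ` (X - {y})"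
    using assms(5) unfolding tr_def by blast
  show ?thesis
  proof (cases "b \<le> a")
    case True
    then have "X - {y} = (\<lambda>z. z + (a - b)) ` (X - {x})" using shift_cancel ab by blast
    from shift_core[OF assms(1-4) this] show ?thesis unfolding endAP_def by blast
  next
    case False
    then have "X - {x} = (\<lambda>z. z + (b - a)) ` (X - {y})" using shift_cancel[OF ab[symmetric]] False by simp
    from shift_core[OF assms(1,3,2) assms(4)[symmetric] this] show ?thesis unfolding endAP_def by blast
  qed
qed


lemma AP_set_eq: "{m + i*d | i. i \<le> N} = (\<lambda>i. m + i*(d::nat)) ` {..<Suc N}"
  by (auto simp: less_Suc_eq_le)

lemma card_AP: "(d::nat) > 0 \<Longrightarrow> card ((\<lambda>i. a + i*d) ` {..<k}) = k"
  by (subst card_image) (auto simp: inj_on_def)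

lemma Delta_AP:
  assumes "(d::nat) > 0"
  shows "Delta ((\<lambda>i. a + i*d) ` {..<k}) = replicate (k - 1) d"
proof -
  have "sorted_list_of_set ((\<lambda>i. a + i*d) ` {..<k}) = map (\<lambda>i. a + i*d) [0..<k]"
  proof (rule sorted_list_of_set_unique[THEN iffD1])
    show "finite ((\<lambda>i. a + i*d) ` {..<k})" by simp
    have "sorted_wrt (<) (map (\<lambda>i. a + i*d) [0..<k])"
      unfolding sorted_wrt_map using assms by (simp add: sorted_wrt_iff_nth_less)
    moreover have "set (map (\<lambda>i. a + i*d) [0..<k]) = (\<lambda>i. a + i*d) ` {..<k}" by auto
    moreover have "length (map (\<lambda>i. a + i*d) [0..<k]) = card ((\<lambda>i. a + i*d) ` {..<k})"
      using card_AP[OF assms] by simp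
    ultimately show "sorted_wrt (<) (map (\<lambda>i. a + i*d) [0..<k]) \<and>
      set (map (\<lambda>i. a + i*d) [0..<k]) = (\<lambda>i. a + i*d) ` {..<k} \<and>
      length (map (\<lambda>i. a + i*d) [0..<k]) = card ((\<lambda>i. a + i*d) ` {..<k})" by blast
  qed
  then show ?thesis unfolding Delta_def Let_def
    by (intro nth_equalityI) (simp_all add: algebra_simps nth_upt less_diff_conv)
qed

lemma Delta_rep_AP:
  assumes fin: "finite X" and D: "Delta X = replicate (card X - 1) d"
  shows "\<exists>a. X = (\<lambda>i. a + i*d) ` {..<card X}"
proof -
  define xs where "xs = sorted_list_of_set X"
  have len: "length xs = card X" using xs_def by simp
  have srt: "sorted_wrt (<) xs" using xs_def by simp
  have st: "set xs = X" using xs_def fin by simp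
  have step: "\<And>i. i + 1 < card X \<Longrightarrow> xs ! (i+1) = xs ! i + d"
  proof -
    fix i assume i: "i + 1 < card X"
    have i': "i < card X - 1" using i by simp
    have "Delta X ! i = xs ! (i+1) - xs ! i" unfolding Delta_def Let_def xs_def[symmetric]
      using i' len by simp
    moreover have "Delta X ! i = d" using D i by simp
    moreover have "xs ! i < xs ! (i+1)" using srt i len by (simp add: sorted_wrt_iff_nth_less)
    ultimately show "xs ! (i+1) = xs ! i + d" by simp
  qed
  have gen: "\<And>i. i < card X \<Longrightarrow> xs ! i = xs ! 0 + i*d"
  proof -
    fix i show "i < card X \<Longrightarrow> xs ! i = xs ! 0 + i*d"
    proof (induction i)
      case 0 then show ?case by simp
    next
      case (Suc i)
      then have "xs ! i = xs ! 0 + i*d" by simp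
      moreover have "xs ! (i+1) = xs ! i + d" using step Suc.prems by simp
      ultimately show ?case by simp
    qed
  qed
  have "X = (\<lambda>i. xs ! i) ` {..<length xs}" unfolding st[symmetric] by (auto simp: in_set_conv_nth)
  then have "X = (\<lambda>i. xs ! i) ` {..<card X}" using len by simp
  also have "\<dots> = (\<lambda>i. xs!0 + i*d) ` {..<card X}" by (rule image_cong[OF refl], rule gen, simp)
  finally show ?thesis by blast
qed

definition condD :: "nat set \<Rightarrow> nat \<Rightarrow> bool" where
  "condD X x \<longleftrightarrow> (\<exists>d>0. Delta X = replicate (card X - 1) d \<and> Delta (X - {x}) = replicate (card X - 2) d)"

lemma Min_AP: "(d::nat) > 0 \<Longrightarrow> Min ((\<lambda>i. a + i*d) ` {..<Suc N}) = a"
  by (rule Min_eqI) auto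

lemma endAP_condD:
  assumes fin: "finite X" and xX: "x \<in> X" and c2: "card X \<ge> 2"
  shows "endAP X x \<longleftrightarrow> condD X x"
proof
  assume "endAP X x"
  then obtain d N where dN: "d > 0" "N \<ge> 1" "X = {Min X + i*d | i. i \<le> N}"
     "x = Min X \<or> x = Min X + N*d" unfolding endAP_def by blast
  define m where "m = Min X"
  have X: "X = (\<lambda>i. m + i*d) ` {..<Suc N}" using dN(3) unfolding AP_set_eq m_def .
  have cX: "card X = Suc N" using X card_AP dN by simp
  have DX: "Delta X = replicate (card X - 1) d" using X Delta_AP[OF dN(1)] cX by simp
  have "\<exists>c. X - {x} = (\<lambda>i. c + i*d) ` {..<N}"
  proof (cases "x = m")
    case True
    have "X - {x} = (\<lambda>i. (m + d) + i*d) ` {..<N}"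
    proof
      show "X - {x} \<subseteq> (\<lambda>i. (m + d) + i*d) ` {..<N}"
      proof
        fix z assume "z \<in> X - {x}"
        then obtain i where i: "i < Suc N" "z = m + i*d" "z \<noteq> m" using X True by auto
        then obtain j where j: "i = Suc j" by (cases i) auto
        then show "z \<in> (\<lambda>i. (m + d) + i*d) ` {..<N}" using i by (intro image_eqI[of _ _ j]) auto
      qed
      show "(\<lambda>i. (m + d) + i*d) ` {..<N} \<subseteq> X - {x}"
      proof
        fix z assume "z \<in> (\<lambda>i. (m + d) + i*d) ` {..<N}"
        then obtain j where j: "j < N" "z = m + d + j*d" by blast
        then have z: "z = m + Suc j * d" "Suc j < Suc N" by auto
        have "z \<in> (\<lambda>i. m + i*d) ` {..<Suc N}" by (rule image_eqI[of _ _ "Suc j"]) (use z in auto)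
        moreover have "z \<noteq> m" using z dN(1) by simp
        ultimately show "z \<in> X - {x}" unfolding X True by blast
      qed
    qed
    then show ?thesis by blast
  next
    case False
    then have xe: "x = m + N*d" using dN(4) m_def by blast
    have "X - {x} = (\<lambda>i. m + i*d) ` {..<N}"
      unfolding X xe using dN(1) by (auto simp: less_Suc_eq)
    then show ?thesis by blast
  qed
  then obtain c where c: "X - {x} = (\<lambda>i. c + i*d) ` {..<N}" by blast
  have "Delta (X - {x}) = replicate (card X - 2) d" using c Delta_AP[OF dN(1)] cX by simp
  then show "condD X x" using DX dN(1) unfolding condD_def by blast
next
  assume "condD X x"
  then obtain d where d: "d > 0" "Delta X = replicate (card X - 1) d"
     "Delta (X - {x}) = replicate (card X - 2) d" unfolding condD_def by blast
  define k where "k = card X"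
  obtain a where a: "X = (\<lambda>i. a + i*d) ` {..<k}" using Delta_rep_AP[OF fin d(2)] k_def by blast
  have cA: "card (X - {x}) = k - 1" using fin xX k_def by simp
  have "Delta (X - {x}) = replicate (card (X - {x}) - 1) d" using d(3) cA k_def by simp
  then have "\<exists>c. X - {x} = (\<lambda>i. c + i*d) ` {..<card (X - {x})}"
    by (intro Delta_rep_AP) (use fin in simp)+
  then obtain c where c: "X - {x} = (\<lambda>i. c + i*d) ` {..<k-1}" unfolding cA by blast
  have k2: "k \<ge> 2" using c2 k_def by simp
  have inj: "\<And>i j. a + i*d = a + j*d \<Longrightarrow> i = j" using d(1) by simp
  have "c \<in> X - {x}" unfolding c using k2 by (intro image_eqI[of _ _ 0]) auto
  then have "c \<in> X" by blast
  then obtain r where r: "r < k" "c = a + r*d" using a by blast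
  have "c + (k-2)*d \<in> X - {x}" unfolding c using k2 by (intro image_eqI[of _ _ "k-2"]) auto
  then have "c + (k-2)*d \<in> X" by blast
  then obtain s where s: "s < k" "c + (k-2)*d = a + s*d" using a by blast
  have "a + (r + (k-2))*d = a + s*d" using r s by (simp add: algebra_simps)
  then have "r + (k - 2) = s" using inj by blast
  then have r1: "r \<le> 1" using s k2 by simp
  obtain i where i: "i < k" "x = a + i*d" using a xX by blast
  have Sk: "Suc (k-1) = k" using k2 by simp
  have MinX: "Min X = a" unfolding a using Min_AP[OF d(1), of a "k-1"] Sk by simp
  have XN: "X = {Min X + j*d | j. j \<le> k-1}" unfolding MinX AP_set_eq Sk using a .
  have xend: "x = Min X \<or> x = Min X + (k-1)*d"
  proof (cases "r = 0")
    case True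
    have "\<not> i < k - 1"
    proof
      assume "i < k - 1"
      then have "x \<in> X - {x}" unfolding c using i r True by auto
      then show False by blast
    qed
    then show ?thesis using i MinX by auto
  next
    case False
    then have r1': "r = 1" using r1 by simp
    have "i = 0"
    proof (rule ccontr)
      assume "i \<noteq> 0"
      then obtain i' where i': "i = Suc i'" by (cases i) auto
      have "x = c + (i - 1)*d" unfolding i' using i(2) r(2) r1' i' by (simp add: algebra_simps)
      moreover have "i - 1 < k - 1" using i \<open>i \<noteq> 0\<close> by simp
      ultimately have "x \<in> X - {x}" unfolding c by blast
      then show False by blast
    qed
    then show ?thesis using i MinX by simp
  qed
  have k1: "k - 1 \<ge> 1" using k2 by simp
  have EN: "\<exists>N\<ge>1. X = {Min X + j*d | j. j \<le> N} \<and> (x = Min X \<or> x = Min X + N*d)"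
    by (intro exI[of _ "k-1"] conjI k1 XN xend)
  show "endAP X x" unfolding endAP_def by (rule exI[of _ d], rule conjI[OF d(1) EN])
qed

lemma AP_remove_top:
  assumes "(d::nat) > 0"
  shows "(\<lambda>i. m+i*d)`{..<Suc N} - {m+N*d} = (\<lambda>i. m+i*d)`{..<N}"
proof
  show "(\<lambda>i. m+i*d)`{..<Suc N} - {m+N*d} \<subseteq> (\<lambda>i. m+i*d)`{..<N}"
  proof
    fix z assume "z \<in> (\<lambda>i. m+i*d)`{..<Suc N} - {m+N*d}"
    then obtain i where i: "i < Suc N" "z = m + i*d" "z \<noteq> m + N*d" by auto
    then have "i \<noteq> N" by auto
    then have "i < N" using i(1) by simp
    then show "z \<in> (\<lambda>i. m+i*d)`{..<N}" using i(2) by blast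
  qed
  show "(\<lambda>i. m+i*d)`{..<N} \<subseteq> (\<lambda>i. m+i*d)`{..<Suc N} - {m+N*d}"
  proof
    fix z assume "z \<in> (\<lambda>i. m+i*d)`{..<N}"
    then obtain j where j: "j < N" "z = m + j*d" by blast
    then have "z \<noteq> m + N*d" using assms by simp
    moreover have "z \<in> (\<lambda>i. m+i*d)`{..<Suc N}" using j by (intro image_eqI[of _ _ j]) auto
    ultimately show "z \<in> (\<lambda>i. m+i*d)`{..<Suc N} - {m+N*d}" by blast
  qed
qed

lemma AP_remove_bot:
  assumes "(d::nat) > 0"
  shows "(\<lambda>i. m+i*d)`{..<Suc N} - {m} = (\<lambda>i. (m+d)+i*d)`{..<N}"
proof
  show "(\<lambda>i. m+i*d)`{..<Suc N} - {m} \<subseteq> (\<lambda>i. (m + d) + i*d) ` {..<N}"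
  proof
    fix z assume "z \<in> (\<lambda>i. m+i*d)`{..<Suc N} - {m}"
    then obtain i where i: "i < Suc N" "z = m + i*d" "z \<noteq> m" by auto
    then obtain j where j: "i = Suc j" by (cases i) auto
    then show "z \<in> (\<lambda>i. (m + d) + i*d) ` {..<N}" using i by (intro image_eqI[of _ _ j]) auto
  qed
  show "(\<lambda>i. (m + d) + i*d) ` {..<N} \<subseteq> (\<lambda>i. m+i*d)`{..<Suc N} - {m}"
  proof
    fix z assume "z \<in> (\<lambda>i. (m + d) + i*d) ` {..<N}"
    then obtain j where j: "j < N" "z = m + d + j*d" by blast
    then have z: "z = m + Suc j * d" "Suc j < Suc N" by auto
    have "z \<in> (\<lambda>i. m + i*d) ` {..<Suc N}" by (rule image_eqI[of _ _ "Suc j"]) (use z in auto)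
    moreover have "z \<noteq> m" using z assms by simp
    ultimately show "z \<in> (\<lambda>i. m+i*d)`{..<Suc N} - {m}" by blast
  qed
qed

lemma AP_Max: "(d::nat) > 0 \<Longrightarrow> Max ((\<lambda>i. m+i*d)`{..<Suc N}) = m + N*d"
  by (rule Max_eqI) (auto simp: less_Suc_eq_le)

lemma endAP_minmax:
  assumes "endAP X x" shows "x = Min X \<or> x = Max X"
proof -
  obtain d N where dN: "d > 0" "N \<ge> 1" "X = {Min X + i*d | i. i \<le> N}"
     "x = Min X \<or> x = Min X + N*d" using assms unfolding endAP_def by blast
  define m where "m = Min X"
  have X: "X = (\<lambda>i. m + i*d)`{..<Suc N}" using dN(3) unfolding AP_set_eq m_def .
  have "Max X = m + N*d" unfolding X by (rule AP_Max[OF dN(1)])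
  then show ?thesis using dN(4) m_def by auto
qed

lemma endAP_other:
  assumes "endAP X x"
  shows "\<exists>y\<in>X. y \<noteq> x \<and> tr (X - {x}) (X - {y})"
proof -
  obtain d N where dN: "d > 0" "N \<ge> 1" "X = {Min X + i*d | i. i \<le> N}"
     "x = Min X \<or> x = Min X + N*d" using assms unfolding endAP_def by blast
  define m where "m = Min X"
  have X: "X = (\<lambda>i. m + i*d)`{..<Suc N}" using dN(3) unfolding AP_set_eq m_def .
  have top: "X - {m + N*d} = (\<lambda>i. m+i*d)`{..<N}" unfolding X using AP_remove_top[OF dN(1)] .
  have bot: "X - {m} = (\<lambda>i. (m+d)+i*d)`{..<N}" unfolding X using AP_remove_bot[OF dN(1)] .
  have tb: "(\<lambda>z. z + 0) ` (X - {m}) = (\<lambda>z. z + d) ` (X - {m + N*d})"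
    unfolding top bot by (simp add: image_image algebra_simps)
  have mX: "m \<in> X" "m + N*d \<in> X" unfolding X using dN(2) by auto
  have ne: "m \<noteq> m + N*d" using dN(1,2) by simp
  show ?thesis
  proof (cases "x = m")
    case True
    have "tr (X - {x}) (X - {m + N*d})" unfolding tr_def True by (intro exI[of _ 0] exI[of _ d]) (rule tb)
    then show ?thesis using mX ne True by (intro bexI[of _ "m+N*d"] conjI) auto
  next
    case False
    then have "x = m + N*d" using dN(4) m_def by blast
    then have xx: "x = m + N*d" .
    have "tr (X - {x}) (X - {m})" unfolding tr_def xx by (intro exI[of _ d] exI[of _ 0]) (rule tb[symmetric])
    then show ?thesis using mX ne xx by (intro bexI[of _ "m"] conjI) auto
  qed
qed

definition ch :: "nat set \<Rightarrow> nat \<Rightarrow> nat" where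
  "ch X x = card {y \<in> X. tr (X - {x}) (X - {y})}"

lemma ch_val:
  assumes fin: "finite X" and xX: "x \<in> X"
  shows "ch X x = (if endAP X x then 2 else 1)"
proof -
  define C where "C = {y \<in> X. tr (X - {x}) (X - {y})}"
  have xC: "x \<in> C" using xX tr_refl C_def by blast
  show ?thesis
  proof (cases "endAP X x")
    case True
    then obtain y where y: "y \<in> X" "y \<noteq> x" "tr (X - {x}) (X - {y})" using endAP_other by blast
    have yC: "y \<in> C" using y C_def by blast
    have sub: "C \<subseteq> {Min X, Max X}"
    proof
      fix z assume z: "z \<in> C"
      show "z \<in> {Min X, Max X}"
      proof (cases "z = x")
        case True then show ?thesis using endAP_minmax[OF \<open>endAP X x\<close>] by blast
      next
        case False
        then have "endAP X z" using tr_remove[OF fin xX _ _] z C_def by blast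
        then show ?thesis using endAP_minmax by blast
      qed
    qed
    have c2: "card {Min X, Max X} \<le> 2" by (cases "Min X = Max X") auto
    have "card C \<le> card {Min X, Max X}" by (rule card_mono[OF _ sub]) simp
    then have "card C \<le> 2" using c2 by simp
    moreover have "card {x, y} \<le> card C" using xC yC fin C_def by (intro card_mono) auto
    ultimately have "card C = 2" using y(2) by simp
    then show ?thesis using True C_def ch_def by simp
  next
    case False
    have "C = {x}"
    proof (rule ccontr)
      assume "C \<noteq> {x}"
      then obtain y where "y \<in> C" "y \<noteq> x" using xC by blast
      then have "endAP X x" using tr_remove[OF fin xX] C_def by blast
      then show False using False by simp
    qed
    then show ?thesis using False C_def ch_def by simp
  qed
qed

definition Kset :: "nat list \<Rightarrow> nat set \<Rightarrow> nat list set" where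
  "Kset s Y = {t. length t = length s \<and> distinct t \<and> set t = Y \<and> (\<forall>k. tr (set (drop k s)) (set (drop k t)))}"

lemma tr_finite: assumes "tr X Y" "finite X" shows "finite Y"
proof -
  obtain a b where ab: "(\<lambda>x. x + a) ` X = (\<lambda>x. x + b) ` Y" using assms(1) unfolding tr_def by blast
  have "finite ((\<lambda>x. x + b) ` Y)" unfolding ab[symmetric] using assms(2) by simp
  then show ?thesis by (rule finite_imageD) (simp add: inj_on_def)
qed

lemma tr_empty: assumes "tr {} Y" shows "Y = {}"
  using assms unfolding tr_def by auto

lemma shift_remove:
  fixes X Y :: "nat set"
  assumes "(\<lambda>x. x + a) ` X = (\<lambda>x. x + b) ` Y" "z \<in> X"
  shows "(\<lambda>x. x + a) ` (X - {z}) = (\<lambda>x. x + b) ` (Y - {z + a - b})"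
proof -
  have "z + a \<in> (\<lambda>x. x + b) ` Y" using assms by blast
  then obtain y where y: "y \<in> Y" "z + a = y + b" by blast
  then have yy: "z + a - b = y" by simp
  have "(\<lambda>x. x + a) ` (X - {z}) = (\<lambda>x. x + a) ` X - {z + a}" by (auto simp: inj_on_def)
  also have "\<dots> = (\<lambda>x. x + b) ` Y - {y + b}" using assms(1) y by simp
  also have "\<dots> = (\<lambda>x. x + b) ` (Y - {y})" by (auto simp: inj_on_def)
  finally show ?thesis unfolding yy .
qed

lemma transl_count:
  fixes X Y :: "nat set"
  assumes ab: "(\<lambda>x. x + a) ` X = (\<lambda>x. x + b) ` Y" and fin: "finite X"
  shows "card {y \<in> Y. tr A (Y - {y})} = card {z \<in> X. tr A (X - {z})}"
proof -
  define \<phi> where "\<phi> = (\<lambda>z::nat. z + a - b)"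
  have ge: "\<And>z. z \<in> X \<Longrightarrow> b \<le> z + a"
  proof -
    fix z assume "z \<in> X"
    then have "z + a \<in> (\<lambda>x. x + b) ` Y" using ab by blast
    then show "b \<le> z + a" by auto
  qed
  have inj: "inj_on \<phi> X"
  proof (rule inj_onI)
    fix x y assume "x \<in> X" "y \<in> X" "\<phi> x = \<phi> y"
    then show "x = y" using ge[of x] ge[of y] unfolding \<phi>_def by arith
  qed
  have img: "\<phi> ` X = Y"
  proof
    show "\<phi> ` X \<subseteq> Y"
    proof
      fix y assume "y \<in> \<phi> ` X"
      then obtain z where z: "z \<in> X" "y = z + a - b" unfolding \<phi>_def by blast
      then have "z + a \<in> (\<lambda>x. x + b) ` Y" using ab by blast
      then obtain y' where "y' \<in> Y" "z + a = y' + b" by blast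
      then show "y \<in> Y" using z by simp
    qed
    show "Y \<subseteq> \<phi> ` X"
    proof
      fix y assume "y \<in> Y"
      then have "y + b \<in> (\<lambda>x. x + a) ` X" using ab by blast
      then obtain z where z: "z \<in> X" "y + b = z + a" by blast
      then have "y = \<phi> z" unfolding \<phi>_def by simp
      then show "y \<in> \<phi> ` X" using z by blast
    qed
  qed
  have key: "\<And>z. z \<in> X \<Longrightarrow> tr A (Y - {\<phi> z}) \<longleftrightarrow> tr A (X - {z})"
  proof -
    fix z assume z: "z \<in> X"
    have "tr (X - {z}) (Y - {\<phi> z})" unfolding tr_def \<phi>_def using shift_remove[OF ab z] by blast
    then show "tr A (Y - {\<phi> z}) \<longleftrightarrow> tr A (X - {z})" using tr_trans tr_sym by blast
  qed
  have "{y \<in> Y. tr A (Y - {y})} = \<phi> ` {z \<in> X. tr A (X - {z})}"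
  proof
    show "{y \<in> Y. tr A (Y - {y})} \<subseteq> \<phi> ` {z \<in> X. tr A (X - {z})}"
    proof
      fix y assume y: "y \<in> {y \<in> Y. tr A (Y - {y})}"
      then obtain z where z: "z \<in> X" "y = \<phi> z" using img by blast
      then have "tr A (X - {z})" using key y by blast
      then show "y \<in> \<phi> ` {z \<in> X. tr A (X - {z})}" using z by blast
    qed
    show "\<phi> ` {z \<in> X. tr A (X - {z})} \<subseteq> {y \<in> Y. tr A (Y - {y})}"
      using key img by blast
  qed
  moreover have "inj_on \<phi> {z \<in> X. tr A (X - {z})}" using inj by (rule inj_on_subset) blast
  ultimately show ?thesis by (simp add: card_image)
qed

lemma Kset_finite: "finite Y \<Longrightarrow> finite (Kset s Y)"
proof -
  assume fY: "finite Y"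
  have "Kset s Y \<subseteq> {t. set t \<subseteq> Y \<and> length t = length s}" unfolding Kset_def by auto
  moreover have "finite {t. set t \<subseteq> Y \<and> length t = length s}" using finite_lists_length_eq[OF fY] .
  ultimately show ?thesis by (rule finite_subset)
qed

lemma Kset_Cons:
  assumes "tr (set (x # s)) Y"
  shows "Kset (x # s) Y = (\<Union>y\<in>{y \<in> Y. tr (set s) (Y - {y})}. (Cons y) ` Kset s (Y - {y}))"
proof
  show "Kset (x # s) Y \<subseteq> (\<Union>y\<in>{y \<in> Y. tr (set s) (Y - {y})}. (Cons y) ` Kset s (Y - {y}))"
  proof
    fix t assume t: "t \<in> Kset (x # s) Y"
    then obtain y t' where tt: "t = y # t'" unfolding Kset_def by (cases t) auto
    have dt: "distinct t" "set t = Y" "length t = Suc (length s)" using t unfolding Kset_def by auto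
    have st': "set t' = Y - {y}" using dt tt by auto
    have yY: "y \<in> Y" using dt tt by auto
    have trk: "\<And>k. tr (set (drop k s)) (set (drop k t'))"
    proof -
      fix k have "tr (set (drop (Suc k) (x#s))) (set (drop (Suc k) t))" using t unfolding Kset_def by blast
      then show "tr (set (drop k s)) (set (drop k t'))" using tt by simp
    qed
    have "tr (set s) (Y - {y})" using trk[of 0] st' by simp
    moreover have "t' \<in> Kset s (Y - {y})" unfolding Kset_def using trk st' dt tt by auto
    ultimately show "t \<in> (\<Union>y\<in>{y \<in> Y. tr (set s) (Y - {y})}. (Cons y) ` Kset s (Y - {y}))"
      using yY tt by blast
  qed
  show "(\<Union>y\<in>{y \<in> Y. tr (set s) (Y - {y})}. (Cons y) ` Kset s (Y - {y})) \<subseteq> Kset (x # s) Y"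
  proof
    fix t assume "t \<in> (\<Union>y\<in>{y \<in> Y. tr (set s) (Y - {y})}. (Cons y) ` Kset s (Y - {y}))"
    then obtain y t' where yt: "y \<in> Y" "t' \<in> Kset s (Y - {y})" "t = y # t'" by blast
    have p: "length t' = length s" "distinct t'" "set t' = Y - {y}" "\<And>k. tr (set (drop k s)) (set (drop k t'))"
      using yt(2) unfolding Kset_def by auto
    have "\<forall>k. tr (set (drop k (x#s))) (set (drop k t))"
    proof
      fix k show "tr (set (drop k (x#s))) (set (drop k t))"
      proof (cases k)
        case 0 then show ?thesis using assms yt(1) yt(3) p(3) by (simp add: insert_absorb)
      next
        case (Suc k') then show ?thesis using p(4) yt(3) by simp
      qed
    qed
    then show "t \<in> Kset (x # s) Y" unfolding Kset_def using p yt by auto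
  qed
qed

lemma Kset_card:
  "distinct s \<Longrightarrow> tr (set s) Y \<Longrightarrow> card (Kset s Y) = (\<Prod>i<length s. ch (set (drop i s)) (s ! i))"
proof (induction s arbitrary: Y)
  case Nil
  then have "Y = {}" using tr_empty by simp
  then have "Kset [] Y = {[]}" unfolding Kset_def by (auto simp: tr_refl)
  then show ?case by simp
next
  case (Cons x s)
  define C where "C = {y \<in> Y. tr (set s) (Y - {y})}"
  have finY: "finite Y" using tr_finite[OF Cons.prems(2)] by simp
  have K: "Kset (x # s) Y = (\<Union>y\<in>C. (Cons y) ` Kset s (Y - {y}))" using Kset_Cons[OF Cons.prems(2)] C_def by simp
  have finC: "finite C" using finY C_def by simp
  have "card (Kset (x # s) Y) = (\<Sum>y\<in>C. card ((Cons y) ` Kset s (Y - {y})))"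
    unfolding K
  proof (rule card_UN_disjoint[OF finC])
    show "\<forall>i\<in>C. finite (Cons i ` Kset s (Y - {i}))" using Kset_finite finY by simp
    show "\<forall>i\<in>C. \<forall>j\<in>C. i \<noteq> j \<longrightarrow> Cons i ` Kset s (Y - {i}) \<inter> Cons j ` Kset s (Y - {j}) = {}" by auto
  qed
  also have "\<dots> = (\<Sum>y\<in>C. (\<Prod>i<length s. ch (set (drop i s)) (s ! i)))"
  proof (rule sum.cong[OF refl])
    fix y assume "y \<in> C"
    then have "tr (set s) (Y - {y})" using C_def by simp
    then have "card (Kset s (Y - {y})) = (\<Prod>i<length s. ch (set (drop i s)) (s ! i))"
      using Cons.IH Cons.prems(1) by simp
    then show "card ((Cons y) ` Kset s (Y - {y})) = (\<Prod>i<length s. ch (set (drop i s)) (s ! i))"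
      by (simp add: card_image)
  qed
  also have "\<dots> = card C * (\<Prod>i<length s. ch (set (drop i s)) (s ! i))" by simp
  also have "card C = ch (set (x # s)) x"
  proof -
    obtain a b where ab: "(\<lambda>z. z + a) ` set (x # s) = (\<lambda>z. z + b) ` Y" using Cons.prems(2) unfolding tr_def by blast
    have "card C = card {z \<in> set (x#s). tr (set s) (set (x#s) - {z})}"
      unfolding C_def by (rule transl_count[OF ab]) simp
    also have "set s = set (x # s) - {x}" using Cons.prems(1) by auto
    finally show ?thesis unfolding ch_def by simp
  qed
  finally have eq: "card (Kset (x # s) Y) = ch (set (x # s)) x * (\<Prod>i<length s. ch (set (drop i s)) (s ! i))" .
  have "(\<Prod>i<length (x#s). ch (set (drop i (x#s))) ((x#s) ! i)) = ch (set (x # s)) x * (\<Prod>i<length s. ch (set (drop i s)) (s ! i))"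
    unfolding length_Cons prod.lessThan_Suc_shift by simp
  then show ?case using eq by simp
qed

lemma set_drop_nth: "set (drop k xs) = (\<lambda>i. xs ! i) ` {k..<length xs}"
proof
  show "set (drop k xs) \<subseteq> (\<lambda>i. xs ! i) ` {k..<length xs}"
  proof
    fix z assume "z \<in> set (drop k xs)"
    then obtain j where "j < length (drop k xs)" "drop k xs ! j = z" by (auto simp: in_set_conv_nth)
    then show "z \<in> (\<lambda>i. xs ! i) ` {k..<length xs}" by (intro image_eqI[of _ _ "k + j"]) auto
  qed
  show "(\<lambda>i. xs ! i) ` {k..<length xs} \<subseteq> set (drop k xs)"
  proof
    fix z assume "z \<in> (\<lambda>i. xs ! i) ` {k..<length xs}"
    then obtain i where i: "k \<le> i" "i < length xs" "z = xs ! i" by auto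
    then have "drop k xs ! (i - k) = z" by simp
    moreover have "i - k < length (drop k xs)" using i by simp
    ultimately show "z \<in> set (drop k xs)" by (metis nth_mem)
  qed
qed

definition pos :: "nat list \<Rightarrow> nat \<Rightarrow> nat" where
  "pos u m = (THE i. i < length u \<and> u ! i = m)"

definition sl :: "nat list \<Rightarrow> nat list" where
  "sl u = map (\<lambda>k. THE i. i < length u \<and> u ! i = k) [1..<length u + 1]"

definition Sset :: "nat list \<Rightarrow> nat \<Rightarrow> nat set" where
  "Sset u m = {x. x < length u \<and> m \<le> u ! x}"

lemma perms_props: assumes "u \<in> perms n" shows "length u = n" "distinct u" "set u = {1..n}"
  using assms unfolding perms_def by auto

lemma pos_prop:
  assumes u: "u \<in> perms n" and m: "1 \<le> m" "m \<le> n"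
  shows "pos u m < n \<and> u ! pos u m = m"
proof -
  have "m \<in> set u" using perms_props[OF u] m by simp
  then obtain i where i: "i < length u" "u ! i = m" by (auto simp: in_set_conv_nth)
  have uniq: "\<And>j. j < length u \<and> u ! j = m \<Longrightarrow> j = i"
    using i perms_props(2)[OF u] by (metis nth_eq_iff_index_eq)
  have "pos u m = i" unfolding pos_def by (rule the_equality[OF _ uniq]) (use i in simp)+
  then show ?thesis using i perms_props(1)[OF u] by simp
qed

lemma pos_nth:
  assumes u: "u \<in> perms n" and x: "x < n"
  shows "pos u (u ! x) = x"
proof -
  have uniq: "\<And>j. j < length u \<and> u ! j = u ! x \<Longrightarrow> j = x"
    using x perms_props[OF u] by (metis nth_eq_iff_index_eq)
  show ?thesis unfolding pos_def by (rule the_equality[OF _ uniq]) (use x perms_props(1)[OF u] in simp)+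
qed

lemma nth_range:
  assumes u: "u \<in> perms n" and x: "x < n"
  shows "1 \<le> u ! x \<and> u ! x \<le> n"
proof -
  have "u ! x \<in> set u" using x perms_props(1)[OF u] by simp
  then show ?thesis using perms_props(3)[OF u] by simp
qed

lemma sl_nth: assumes u: "u \<in> perms n" and i: "i < n" shows "sl u ! i = pos u (Suc i)"
  using i perms_props(1)[OF u] unfolding sl_def pos_def by (simp del: upt_Suc)

lemma length_sl: "length (sl u) = length u" unfolding sl_def by (simp del: upt_Suc)

lemma set_drop_sl:
  assumes u: "u \<in> perms n"
  shows "set (drop k (sl u)) = Sset u (Suc k)"
proof -
  have len: "length (sl u) = n" "length u = n" using length_sl perms_props(1)[OF u] by auto
  have "set (drop k (sl u)) = (\<lambda>i. pos u (Suc i)) ` {k..<n}"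
    unfolding set_drop_nth len by (rule image_cong) (simp_all add: sl_nth[OF u])
  also have "\<dots> = Sset u (Suc k)"
  proof
    show "(\<lambda>i. pos u (Suc i)) ` {k..<n} \<subseteq> Sset u (Suc k)"
    proof
      fix z assume "z \<in> (\<lambda>i. pos u (Suc i)) ` {k..<n}"
      then obtain i where i: "k \<le> i" "i < n" "z = pos u (Suc i)" by auto
      then have "z < n \<and> u ! z = Suc i" using pos_prop[OF u, of "Suc i"] by simp
      then show "z \<in> Sset u (Suc k)" unfolding Sset_def using i len by simp
    qed
    show "Sset u (Suc k) \<subseteq> (\<lambda>i. pos u (Suc i)) ` {k..<n}"
    proof
      fix z assume "z \<in> Sset u (Suc k)"
      then have z: "z < n" "Suc k \<le> u ! z" unfolding Sset_def using len by auto
      have r: "1 \<le> u ! z \<and> u ! z \<le> n" using nth_range[OF u z(1)] .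
      have "z = pos u (Suc (u ! z - 1))" using pos_nth[OF u z(1)] r by simp
      then show "z \<in> (\<lambda>i. pos u (Suc i)) ` {k..<n}" using z r
        by (intro image_eqI[of _ _ "u ! z - 1"]) auto
    qed
  qed
  finally show ?thesis .
qed

lemma Sset_one: assumes u: "u \<in> perms n" shows "Sset u 1 = {..<n}"
  using nth_range[OF u] perms_props(1)[OF u] unfolding Sset_def by auto

lemma sl_props:
  assumes u: "u \<in> perms n"
  shows "length (sl u) = n" "distinct (sl u)" "set (sl u) = {..<n}"
proof -
  show l: "length (sl u) = n" using length_sl perms_props(1)[OF u] by simp
  show "set (sl u) = {..<n}" using set_drop_sl[OF u, of 0] Sset_one[OF u] by simp
  then show "distinct (sl u)" using l by (simp add: card_distinct)
qed

lemma sl_inj: "inj_on sl (perms n)"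
proof (rule inj_onI)
  fix u v assume u: "u \<in> perms n" and v: "v \<in> perms n" and e: "sl u = sl v"
  have S: "\<And>m. Sset u (Suc m) = Sset v (Suc m)"
  proof -
    fix m show "Sset u (Suc m) = Sset v (Suc m)" using set_drop_sl[OF u, of m] set_drop_sl[OF v, of m] e by simp
  qed
  have lu: "length u = n" "length v = n" using perms_props u v by auto
  show "u = v"
  proof (rule nth_equalityI)
    show "length u = length v" using lu by simp
    fix x assume "x < length u"
    then have x: "x < n" using lu by simp
    have ge: "\<And>a b. a \<in> perms n \<Longrightarrow> b \<in> perms n \<Longrightarrow> (\<And>m. Sset a (Suc m) = Sset b (Suc m)) \<Longrightarrow> a ! x \<le> b ! x"
    proof -
      fix a b assume a: "a \<in> perms n" and b: "b \<in> perms n" and Sab: "\<And>m. Sset a (Suc m) = Sset b (Suc m)"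
      have r: "1 \<le> a ! x" using nth_range[OF a x] by simp
      have "x \<in> Sset a (Suc (a ! x - 1))" unfolding Sset_def using x perms_props(1)[OF a] r by simp
      then have "x \<in> Sset b (Suc (a ! x - 1))" using Sab by simp
      then show "a ! x \<le> b ! x" unfolding Sset_def using r by simp
    qed
    have "u ! x \<le> v ! x" by (rule ge[OF u v S])
    moreover have "v ! x \<le> u ! x" by (rule ge[OF v u]) (simp add: S)
    ultimately show "u ! x = v ! x" by simp
  qed
qed

lemma sl_surj:
  assumes t: "length t = n" "distinct t" "set t = {..<n}"
  shows "\<exists>u\<in>perms n. sl u = t"
proof -
  define idx where "idx x = (THE i. i < n \<and> t ! i = x)" for x
  have idx1: "\<And>x. x < n \<Longrightarrow> idx x < n \<and> t ! idx x = x"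
  proof -
    fix x assume "x < n"
    then have "x \<in> set t" using t by simp
    then obtain i where i: "i < n" "t ! i = x" by (metis in_set_conv_nth t(1))
    have "idx x = i" unfolding idx_def
    proof (rule the_equality)
      show "i < n \<and> t ! i = x" using i by simp
      fix j assume "j < n \<and> t ! j = x"
      then show "j = i" using i nth_eq_iff_index_eq[OF t(2), of j i] t(1) by simp
    qed
    then show "idx x < n \<and> t ! idx x = x" using i by simp
  qed
  have idx2: "\<And>i. i < n \<Longrightarrow> idx (t ! i) = i"
  proof -
    fix i assume i: "i < n"
    show "idx (t ! i) = i" unfolding idx_def
    proof (rule the_equality)
      show "i < n \<and> t ! i = t ! i" using i by simp
      fix j assume "j < n \<and> t ! j = t ! i"
      then show "j = i" using i nth_eq_iff_index_eq[OF t(2), of j i] t(1) by simp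
    qed
  qed
  have tn: "\<And>i. i < n \<Longrightarrow> t ! i < n"
  proof -
    fix i assume "i < n" then have "t ! i \<in> set t" using t(1) by simp
    then show "t ! i < n" using t(3) by simp
  qed
  define u where "u = map (\<lambda>x. Suc (idx x)) [0..<n]"
  have lu: "length u = n" unfolding u_def by simp
  have un: "\<And>x. x < n \<Longrightarrow> u ! x = Suc (idx x)" unfolding u_def by simp
  have du: "distinct u"
  proof -
    have "inj_on (\<lambda>x. Suc (idx x)) {0..<n}"
    proof (rule inj_onI)
      fix a b assume ab: "a \<in> {0..<n}" "b \<in> {0..<n}" "Suc (idx a) = Suc (idx b)"
      then have e: "t ! idx a = t ! idx b" by simp
      have "a = t ! idx a" using idx1[of a] ab(1) by simp
      also have "\<dots> = t ! idx b" by (rule e)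
      also have "\<dots> = b" using idx1[of b] ab(2) by simp
      finally show "a = b" .
    qed
    then show ?thesis unfolding u_def by (simp add: distinct_map)
  qed
  have su: "set u = {1..n}"
  proof
    show "set u \<subseteq> {1..n}"
    proof
      fix z assume "z \<in> set u"
      then obtain x where x: "x < n" "z = Suc (idx x)" unfolding u_def by auto
      then show "z \<in> {1..n}" using idx1[of x] by simp
    qed
    show "{1..n} \<subseteq> set u"
    proof
      fix m assume m: "m \<in> {1..n}"
      then have "m - 1 < n" by auto
      then have "u ! (t ! (m - 1)) = m" using un tn idx2 m by simp
      moreover have "t ! (m - 1) < length u" using tn \<open>m - 1 < n\<close> lu by simp
      ultimately show "m \<in> set u" by (metis nth_mem)
    qed
  qed
  have up: "u \<in> perms n" unfolding perms_def using lu du su by simp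
  have "sl u = t"
  proof (rule nth_equalityI)
    show "length (sl u) = length t" using length_sl lu t by simp
    fix i assume "i < length (sl u)"
    then have i: "i < n" using length_sl lu by simp
    have "u ! (t ! i) = Suc i" using un tn idx2 i by simp
    then have "pos u (Suc i) = t ! i" using pos_nth[OF up tn[OF i]] by simp
    then show "sl u ! i = t ! i" using sl_nth[OF up i] by simp
  qed
  then show ?thesis using up by blast
qed

lemma sl_image: "sl ` perms n = {t. length t = n \<and> distinct t \<and> set t = {..<n}}"
proof
  show "sl ` perms n \<subseteq> {t. length t = n \<and> distinct t \<and> set t = {..<n}}"
  proof
    fix t assume "t \<in> sl ` perms n"
    then obtain u where "u \<in> perms n" "t = sl u" by blast
    then show "t \<in> {t. length t = n \<and> distinct t \<and> set t = {..<n}}" using sl_props by simp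
  qed
  show "{t. length t = n \<and> distinct t \<and> set t = {..<n}} \<subseteq> sl ` perms n"
  proof
    fix t assume "t \<in> {t. length t = n \<and> distinct t \<and> set t = {..<n}}"
    then have "length t = n" "distinct t" "set t = {..<n}" by auto
    then obtain u where "u \<in> perms n" "sl u = t" using sl_surj by blast
    then show "t \<in> sl ` perms n" by blast
  qed
qed

lemma perm_inv_sl: "perm_inv u = map Suc (sl u)"
  unfolding perm_inv_def sl_def by simp

lemma sorted_list_Suc: "finite X \<Longrightarrow> sorted_list_of_set (Suc ` X) = map Suc (sorted_list_of_set X)"
proof -
  assume fX: "finite X"
  show ?thesis
  proof (rule sorted_list_of_set_unique[THEN iffD1])
    show "finite (Suc ` X)" using fX by simp
    show "sorted_wrt (<) (map Suc (sorted_list_of_set X)) \<and> set (map Suc (sorted_list_of_set X)) = Suc ` X \<and>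
      length (map Suc (sorted_list_of_set X)) = card (Suc ` X)"
      using fX by (simp add: sorted_wrt_map card_image)
  qed
qed

lemma Delta_Suc: "finite X \<Longrightarrow> Delta (Suc ` X) = Delta X"
  unfolding Delta_def Let_def by (simp add: sorted_list_Suc)

definition EmP :: "nat \<Rightarrow> (nat \<Rightarrow> nat) \<Rightarrow> nat list \<Rightarrow> nat set" where
  "EmP n P w = {i. i + n \<le> length w \<and> (\<forall>x<n. P x \<le> w ! (i + x))}"

definition ssP :: "nat \<Rightarrow> (nat \<Rightarrow> nat) \<Rightarrow> (nat \<Rightarrow> nat) \<Rightarrow> bool" where
  "ssP n P1 P2 \<longleftrightarrow> (\<exists>f. weight_preserving f \<and> (\<forall>w\<in>pwords. EmP n P1 w = EmP n P2 (f w)))"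

lemma ssP_refl: "ssP n P P"
  unfolding ssP_def weight_preserving_def by (intro exI[of _ id]) auto

lemma ssP_trans: assumes "ssP n P1 P2" "ssP n P2 P3" shows "ssP n P1 P3"
proof -
  obtain f where f: "weight_preserving f" "\<forall>w\<in>pwords. EmP n P1 w = EmP n P2 (f w)"
    using assms(1) unfolding ssP_def by blast
  obtain g where g: "weight_preserving g" "\<forall>w\<in>pwords. EmP n P2 w = EmP n P3 (g w)"
    using assms(2) unfolding ssP_def by blast
  have fb: "bij_betw f pwords pwords" and gb: "bij_betw g pwords pwords"
    using f(1) g(1) unfolding weight_preserving_def by auto
  have fin: "\<And>w. w \<in> pwords \<Longrightarrow> f w \<in> pwords" using fb bij_betwE by blast
  have "weight_preserving (g \<circ> f)"
    unfolding weight_preserving_def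
  proof (intro conjI ballI)
    show "bij_betw (g \<circ> f) pwords pwords" using bij_betw_trans[OF fb gb] .
    fix w assume w: "w \<in> pwords"
    show "length ((g \<circ> f) w) = length w" using f(1) g(1) fin[OF w] w unfolding weight_preserving_def by simp
    show "wnorm ((g \<circ> f) w) = wnorm w" using f(1) g(1) fin[OF w] w unfolding weight_preserving_def by simp
  qed
  moreover have "\<forall>w\<in>pwords. EmP n P1 w = EmP n P3 ((g \<circ> f) w)" using f(2) g(2) fin by simp
  ultimately show ?thesis unfolding ssP_def by blast
qed

lemma ssP_sym: assumes "ssP n P1 P2" shows "ssP n P2 P1"
proof -
  obtain f where f: "weight_preserving f" "\<forall>w\<in>pwords. EmP n P1 w = EmP n P2 (f w)"
    using assms(1) unfolding ssP_def by blast
  have fb: "bij_betw f pwords pwords" using f(1) unfolding weight_preserving_def by auto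
  define g where "g = inv_into pwords f"
  have gb: "bij_betw g pwords pwords" unfolding g_def by (rule bij_betw_inv_into[OF fb])
  have gin: "\<And>w. w \<in> pwords \<Longrightarrow> g w \<in> pwords" using gb bij_betwE by blast
  have fg: "\<And>w. w \<in> pwords \<Longrightarrow> f (g w) = w" unfolding g_def using fb bij_betw_inv_into_right by metis
  have "weight_preserving g"
    unfolding weight_preserving_def
  proof (intro conjI ballI)
    show "bij_betw g pwords pwords" by (rule gb)
    fix w assume w: "w \<in> pwords"
    have "length (f (g w)) = length (g w)" "wnorm (f (g w)) = wnorm (g w)"
      using f(1) gin[OF w] unfolding weight_preserving_def by auto
    then show "length (g w) = length w" "wnorm (g w) = wnorm w" using fg[OF w] by auto
  qed
  moreover have "\<forall>w\<in>pwords. EmP n P2 w = EmP n P1 (g w)"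
  proof
    fix w assume w: "w \<in> pwords"
    have "EmP n P1 (g w) = EmP n P2 (f (g w))" using f(2) gin[OF w] by blast
    then show "EmP n P2 w = EmP n P1 (g w)" using fg[OF w] by simp
  qed
  ultimately show ?thesis unfolding ssP_def by blast
qed

lemma EmP_cong: "(\<And>x. x < n \<Longrightarrow> P x = P' x) \<Longrightarrow> EmP n P w = EmP n P' w"
  unfolding EmP_def by auto

lemma ssP_cong: "ssP n P1 P2 \<Longrightarrow> (\<And>x. x < n \<Longrightarrow> P1 x = P1' x) \<Longrightarrow> (\<And>x. x < n \<Longrightarrow> P2 x = P2' x) \<Longrightarrow> ssP n P1' P2'"
  unfolding ssP_def using EmP_cong by metis

lemma wp_from_inj:
  assumes maps: "\<And>w. w \<in> pwords \<Longrightarrow> f w \<in> pwords \<and> length (f w) = length w \<and> wnorm (f w) = wnorm w"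
    and inj: "inj_on f pwords"
  shows "weight_preserving f"
proof -
  have surj: "pwords \<subseteq> f ` pwords"
  proof
    fix w assume w: "w \<in> pwords"
    define A where "A = {v \<in> pwords. length v = length w \<and> wnorm v = wnorm w}"
    have "A \<subseteq> {v. set v \<subseteq> {0..wnorm w} \<and> length v = length w}"
    proof
      fix v assume "v \<in> A"
      then have v: "length v = length w" "wnorm v = wnorm w" unfolding A_def by auto
      have "\<forall>x\<in>set v. x \<le> wnorm w"
      proof
        fix x assume "x \<in> set v"
        then have "x \<le> sum_list v" by (metis le0 member_le_sum_list)
        then show "x \<le> wnorm w" using v(2) unfolding wnorm_def by simp
      qed
      then show "v \<in> {v. set v \<subseteq> {0..wnorm w} \<and> length v = length w}" using v(1) by auto
    qed
    then have finA: "finite A" using finite_lists_length_eq[of "{0..wnorm w}" "length w"] finite_subset by blast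
    have sub: "f ` A \<subseteq> A" unfolding A_def using maps by auto
    have "inj_on f A" using inj by (rule inj_on_subset) (auto simp: A_def)
    then have "f ` A = A" using endo_inj_surj[OF finA sub] by simp
    moreover have "w \<in> A" unfolding A_def using w by simp
    ultimately show "w \<in> f ` pwords" unfolding A_def by blast
  qed
  have "bij_betw f pwords pwords" unfolding bij_betw_def using inj surj maps by blast
  then show ?thesis unfolding weight_preserving_def using maps by blast
qed

definition Kd :: "nat set \<Rightarrow> nat \<Rightarrow> nat \<Rightarrow> nat" where
  "Kd H d p = (LEAST k. \<not> (d*(k+1) \<le> p \<and> p - d*(k+1) \<in> H))"

definition rs :: "nat set \<Rightarrow> nat \<Rightarrow> nat \<Rightarrow> nat" where
  "rs H d p = p - d * Kd H d p"

definition pim :: "nat set \<Rightarrow> nat \<Rightarrow> nat \<Rightarrow> nat" where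
  "pim H d p = (if p \<in> H then (if p + d \<in> H then p + d else rs H d p) else p)"

lemma Kd_ex: "(d::nat) > 0 \<Longrightarrow> \<exists>k. \<not> (d*(k+1) \<le> p \<and> p - d*(k+1) \<in> H)"
proof -
  assume d: "d > 0"
  have "1 * (p+1) \<le> d * (p+1)" using d by (intro mult_right_mono) auto
  then have "d*(p+1) > p" by simp
  then show ?thesis by (intro exI[of _ p]) simp
qed

lemma Kd_a: "k < Kd H d p \<Longrightarrow> d*(k+1) \<le> p \<and> p - d*(k+1) \<in> H"
  unfolding Kd_def using not_less_Least by blast

lemma Kd_b: "(d::nat) > 0 \<Longrightarrow> \<not> (d*(Kd H d p + 1) \<le> p \<and> p - d*(Kd H d p + 1) \<in> H)"
  unfolding Kd_def using LeastI_ex[OF Kd_ex] by blast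

lemma Kd_c: "d * Kd H d p \<le> p"
proof (cases "Kd H d p")
  case 0 then show ?thesis by simp
next
  case (Suc k)
  then have "d*(k+1) \<le> p" using Kd_a[of k H d p] by simp
  then show ?thesis using Suc by simp
qed

lemma rs_chain: assumes "p \<in> H" "j \<le> Kd H d p" shows "rs H d p + d*j \<in> H"
proof (cases "j = Kd H d p")
  case True
  then show ?thesis unfolding rs_def using Kd_c[of d H p] assms by simp
next
  case False
  then have k: "Kd H d p - j - 1 < Kd H d p" using assms(2) by simp
  have e: "Kd H d p - j - 1 + 1 = Kd H d p - j" using False assms(2) by simp
  have "d*(Kd H d p - j - 1 + 1) \<le> p \<and> p - d*(Kd H d p - j - 1 + 1) \<in> H" by (rule Kd_a[OF k])
  then have "p - d*(Kd H d p - j) \<in> H" by (simp only: e)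
  moreover have "p - d*(Kd H d p - j) = rs H d p + d*j"
    unfolding rs_def using Kd_c[of d H p] assms(2) by (simp add: diff_mult_distrib2)
  ultimately show ?thesis by simp
qed

lemma rs_in: "p \<in> H \<Longrightarrow> rs H d p \<in> H"
  using rs_chain[of p H 0 d] by simp

lemma rs_start: "(d::nat) > 0 \<Longrightarrow> \<not> (d \<le> rs H d p \<and> rs H d p - d \<in> H)"
proof
  assume d: "d > 0" and c: "d \<le> rs H d p \<and> rs H d p - d \<in> H"
  have c1: "d \<le> p - d * Kd H d p" using c unfolding rs_def by simp
  have "d * Kd H d p + d \<le> p" using c1 Kd_c[of d H p] by linarith
  then have e1: "d*(Kd H d p + 1) \<le> p" by (simp add: algebra_simps)
  have e2: "p - d*(Kd H d p + 1) = rs H d p - d" unfolding rs_def by simp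
  show False using Kd_b[OF d, of H p] e1 e2 c by simp
qed

lemma rs_le: "rs H d p \<le> p" unfolding rs_def by simp

lemma pim_in: "p \<in> H \<Longrightarrow> pim H d p \<in> H"
  unfolding pim_def using rs_in by auto

lemma pim_inj:
  assumes d: "(d::nat) > 0"
  shows "inj_on (pim H d) A"
proof (rule inj_onI)
  fix p q assume "p \<in> A" "q \<in> A" and e: "pim H d p = pim H d q"
  have bk: "\<And>p q. p \<in> H \<Longrightarrow> q \<in> H \<Longrightarrow> p + d \<notin> H \<Longrightarrow> q + d \<notin> H \<Longrightarrow> rs H d p = rs H d q \<Longrightarrow> Kd H d p \<le> Kd H d q"
  proof (rule ccontr)
    fix p q assume pq: "p \<in> H" "q \<in> H" "p + d \<notin> H" "q + d \<notin> H" "rs H d p = rs H d q"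
      and "\<not> Kd H d p \<le> Kd H d q"
    then have lt: "Kd H d q + 1 \<le> Kd H d p" by simp
    have "rs H d p + d*(Kd H d q + 1) \<in> H" using rs_chain[OF pq(1) lt] .
    moreover have "rs H d q + d*(Kd H d q) = q" unfolding rs_def using Kd_c[of d H q] by simp
    ultimately have "q + d \<in> H" using pq(5) by (simp add: algebra_simps)
    then show False using pq(4) by simp
  qed
  show "p = q"
  proof (cases "p \<in> H")
    case pH: True
    show ?thesis
    proof (cases "q \<in> H")
      case qH: True
      show ?thesis
      proof (cases "p + d \<in> H")
        case pf: True
        show ?thesis
        proof (cases "q + d \<in> H")
          case True then show ?thesis using e pf pH qH unfolding pim_def by simp
        next
          case False
          then have "p + d = rs H d q" using e pf pH qH unfolding pim_def by simp
          then show ?thesis using rs_start[OF d, of H q] pH by (metis add_diff_cancel_right' le_add2)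
        qed
      next
        case pb: False
        show ?thesis
        proof (cases "q + d \<in> H")
          case True
          then have "q + d = rs H d p" using e pb pH qH unfolding pim_def by simp
          then show ?thesis using rs_start[OF d, of H p] qH by (metis add_diff_cancel_right' le_add2)
        next
          case qb: False
          then have r: "rs H d p = rs H d q" using e pb pH qH unfolding pim_def by simp
          have K: "Kd H d p = Kd H d q" using bk[OF pH qH pb qb r] bk[OF qH pH qb pb r[symmetric]] by simp
          have E1: "rs H d p + d * Kd H d p = p" and E2: "rs H d q + d * Kd H d q = q"
            unfolding rs_def using Kd_c[of d H p] Kd_c[of d H q] by simp_all
          have "p = rs H d p + d * Kd H d p" using E1 by simp
          also have "\<dots> = rs H d q + d * Kd H d q" by (simp only: r K)
          also have "\<dots> = q" by (rule E2)
          finally show ?thesis .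
        qed
      qed
    next
      case False
      then show ?thesis using e pim_in[OF pH, of d] unfolding pim_def by simp
    qed
  next
    case pH: False
    show ?thesis
    proof (cases "q \<in> H")
      case True
      then show ?thesis using e pim_in[OF True, of d] pH unfolding pim_def by simp
    next
      case False then show ?thesis using e pH unfolding pim_def by simp
    qed
  qed
qed

lemma pim_range: assumes "H \<subseteq> {..<L}" "p < L" shows "pim H d p < L"
  using assms rs_le[of H d p] unfolding pim_def by auto

lemma pim_bij:
  assumes d: "(d::nat) > 0" and H: "H \<subseteq> {..<L}"
  shows "pim H d ` {..<L} = {..<L}"
proof (rule endo_inj_surj)
  show "finite {..<L}" by simp
  show "pim H d ` {..<L} \<subseteq> {..<L}" using pim_range[OF H] by auto
  show "inj_on (pim H d) {..<L}" by (rule pim_inj[OF d])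
qed

definition Hs :: "nat \<Rightarrow> nat list \<Rightarrow> nat set" where
  "Hs \<theta> w = {p. p < length w \<and> \<theta> \<le> w ! p}"

definition rot :: "nat \<Rightarrow> nat \<Rightarrow> nat list \<Rightarrow> nat list" where
  "rot \<theta> d w = map (\<lambda>p. w ! pim (Hs \<theta> w) d p) [0..<length w]"

lemma rot_len: "length (rot \<theta> d w) = length w" unfolding rot_def by simp
lemma rot_nth: "p < length w \<Longrightarrow> rot \<theta> d w ! p = w ! pim (Hs \<theta> w) d p" unfolding rot_def by simp

lemma Hs_sub: "Hs \<theta> w \<subseteq> {..<length w}" unfolding Hs_def by auto

lemma Hs_rot: "Hs \<theta> (rot \<theta> d w) = Hs \<theta> w"
proof -
  have "\<And>p. p < length w \<Longrightarrow> (\<theta> \<le> rot \<theta> d w ! p) \<longleftrightarrow> p \<in> Hs \<theta> w"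
  proof -
    fix p assume p: "p < length w"
    show "(\<theta> \<le> rot \<theta> d w ! p) \<longleftrightarrow> p \<in> Hs \<theta> w"
    proof (cases "p \<in> Hs \<theta> w")
      case True
      then have "pim (Hs \<theta> w) d p \<in> Hs \<theta> w" by (rule pim_in)
      then show ?thesis using True p rot_nth[OF p] unfolding Hs_def by simp
    next
      case False
      then have "pim (Hs \<theta> w) d p = p" unfolding pim_def by simp
      then show ?thesis using False p rot_nth[OF p] unfolding Hs_def by simp
    qed
  qed
  then show ?thesis unfolding Hs_def[of _ "rot \<theta> d w"] using rot_len by (auto simp: Hs_def)
qed

lemma rot_props:
  assumes d: "d > 0" and w: "w \<in> pwords"
  shows "rot \<theta> d w \<in> pwords \<and> length (rot \<theta> d w) = length w \<and> wnorm (rot \<theta> d w) = wnorm w"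
proof -
  let ?H = "Hs \<theta> w"
  have bij: "pim ?H d ` {..<length w} = {..<length w}" using pim_bij[OF d Hs_sub] .
  have inj: "inj_on (pim ?H d) {..<length w}" using pim_inj[OF d] .
  have "\<forall>x\<in>set (rot \<theta> d w). 0 < x"
  proof
    fix x assume "x \<in> set (rot \<theta> d w)"
    then obtain p where p: "p < length w" "x = w ! pim ?H d p" unfolding rot_def by auto
    have "pim ?H d p < length w" using bij p(1) by blast
    then show "0 < x" using w p(2) unfolding pwords_def by simp
  qed
  moreover have "wnorm (rot \<theta> d w) = wnorm w"
  proof -
    have "wnorm (rot \<theta> d w) = (\<Sum>p<length w. w ! pim ?H d p)"
      unfolding wnorm_def sum_list_sum_nth rot_len using rot_nth by (simp add: atLeast0LessThan)
    also have "\<dots> = (\<Sum>q\<in>pim ?H d ` {..<length w}. w ! q)" using sum.reindex[OF inj, of "\<lambda>q. w ! q"] by simp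
    also have "\<dots> = wnorm w" unfolding bij wnorm_def sum_list_sum_nth by (simp add: atLeast0LessThan)
    finally show ?thesis .
  qed
  ultimately show ?thesis unfolding pwords_def using rot_len by simp
qed

lemma rot_inj:
  assumes d: "d > 0"
  shows "inj_on (rot \<theta> d) pwords"
proof (rule inj_onI)
  fix w v assume "w \<in> pwords" "v \<in> pwords" and e: "rot \<theta> d w = rot \<theta> d v"
  have l: "length w = length v" using e rot_len by metis
  have H: "Hs \<theta> w = Hs \<theta> v" using Hs_rot e by metis
  have bij: "pim (Hs \<theta> w) d ` {..<length w} = {..<length w}" using pim_bij[OF d Hs_sub] .
  show "w = v"
  proof (rule nth_equalityI)
    show "length w = length v" by (rule l)
    fix q assume q: "q < length w"
    then obtain p where p: "p < length w" "q = pim (Hs \<theta> w) d p" using bij by (metis imageE lessThan_iff)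
    have "rot \<theta> d w ! p = rot \<theta> d v ! p" using e by simp
    then show "w ! q = v ! q" using rot_nth[OF p(1)] rot_nth[of p v] p l H by simp
  qed
qed

lemma rot_wp: "d > 0 \<Longrightarrow> weight_preserving (rot \<theta> d)"
  by (rule wp_from_inj) (auto simp: rot_props rot_inj)

lemma flip_EmP:
  assumes d: "d > 0"
  and Qn: "Q \<subseteq> {..<n}"
  and succ: "\<And>q. q \<in> Q \<Longrightarrow> q \<noteq> tq \<Longrightarrow> q + d \<in> Q"
  and pred: "\<And>x. x \<in> Q \<Longrightarrow> x \<noteq> bq \<Longrightarrow> \<exists>q\<in>Q. q \<noteq> tq \<and> x = q + d"
  and out: "\<And>x. x < n \<Longrightarrow> x \<notin> Q \<Longrightarrow> P1 x = P2 x \<and> P1 x < \<theta>"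
  and inQ: "\<And>x. x \<in> Q \<Longrightarrow> \<theta> \<le> P1 x \<and> \<theta> \<le> P2 x"
  and bt: "P1 bq \<le> \<theta>" and tp: "P2 tq \<le> \<theta>"
  and shift: "\<And>q. q \<in> Q \<Longrightarrow> q \<noteq> tq \<Longrightarrow> P2 q = P1 (q + d)"
  shows "EmP n P1 w = EmP n P2 (rot \<theta> d w)"
proof -
  let ?H = "Hs \<theta> w"
  let ?f = "rot \<theta> d w"
  have lf: "length ?f = length w" by (rule rot_len)
  have fn: "\<And>p. p < length w \<Longrightarrow> ?f ! p = w ! pim ?H d p" by (rule rot_nth)
  have Hw: "\<And>p. p < length w \<Longrightarrow> p \<in> ?H \<longleftrightarrow> \<theta> \<le> w ! p" unfolding Hs_def by simp
  have Hf: "\<And>p. p < length w \<Longrightarrow> p \<in> ?H \<longleftrightarrow> \<theta> \<le> ?f ! p"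
  proof -
    fix p assume p: "p < length w"
    have "p \<in> Hs \<theta> ?f \<longleftrightarrow> \<theta> \<le> ?f ! p" unfolding Hs_def using p lf by simp
    then show "p \<in> ?H \<longleftrightarrow> \<theta> \<le> ?f ! p" unfolding Hs_rot .
  qed
  have pimH: "\<And>p. p \<in> ?H \<Longrightarrow> \<theta> \<le> w ! pim ?H d p"
  proof -
    fix p assume "p \<in> ?H"
    then have "pim ?H d p \<in> ?H" by (rule pim_in)
    then show "\<theta> \<le> w ! pim ?H d p" unfolding Hs_def by simp
  qed
  have pimF: "\<And>p. p \<in> ?H \<Longrightarrow> p + d \<in> ?H \<Longrightarrow> pim ?H d p = p + d" unfolding pim_def by simp
  have pimN: "\<And>p. p \<notin> ?H \<Longrightarrow> pim ?H d p = p" unfolding pim_def by simp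
  show ?thesis
  proof (rule set_eqI)
    fix i
    show "i \<in> EmP n P1 w \<longleftrightarrow> i \<in> EmP n P2 ?f"
    proof
      assume "i \<in> EmP n P1 w"
      then have L: "i + n \<le> length w" and A: "\<And>x. x < n \<Longrightarrow> P1 x \<le> w ! (i + x)" unfolding EmP_def by auto
      have "\<And>x. x < n \<Longrightarrow> P2 x \<le> ?f ! (i + x)"
      proof -
        fix x assume x: "x < n"
        have ix: "i + x < length w" using L x by simp
        show "P2 x \<le> ?f ! (i + x)"
        proof (cases "x \<in> Q")
          case xQ: True
          have iH: "i + x \<in> ?H" using Hw[OF ix] inQ[OF xQ] A[OF x] by simp
          show ?thesis
          proof (cases "x = tq")
            case True
            then show ?thesis using pimH[OF iH] fn[OF ix] tp by simp
          next
            case False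
            have xd: "x + d \<in> Q" using succ[OF xQ False] .
            have xdn: "x + d < n" using xd Qn by auto
            have ixd: "i + (x + d) < length w" using L xdn by simp
            have "i + (x + d) \<in> ?H" using Hw[OF ixd] inQ[OF xd] A[OF xdn] by simp
            then have "pim ?H d (i + x) = i + (x + d)" using pimF[OF iH] by (simp add: add.assoc)
            then show ?thesis using fn[OF ix] A[OF xdn] shift[OF xQ False] by simp
          qed
        next
          case False
          note o = out[OF x False]
          show ?thesis
          proof (cases "i + x \<in> ?H")
            case True
            then show ?thesis using pimH[OF True] fn[OF ix] o by simp
          next
            case nH: False
            then show ?thesis using pimN[OF nH] fn[OF ix] o A[OF x] by simp
          qed
        qed
      qed
      then show "i \<in> EmP n P2 ?f" unfolding EmP_def using L lf by simp
    next
      assume "i \<in> EmP n P2 ?f"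
      then have L: "i + n \<le> length w" and A: "\<And>x. x < n \<Longrightarrow> P2 x \<le> ?f ! (i + x)" unfolding EmP_def using lf by auto
      have QH: "\<And>x. x \<in> Q \<Longrightarrow> i + x \<in> ?H"
      proof -
        fix x assume xQ: "x \<in> Q"
        then have x: "x < n" using Qn by auto
        have ix: "i + x < length w" using L x by simp
        show "i + x \<in> ?H" using Hf[OF ix] inQ[OF xQ] A[OF x] by simp
      qed
      have "\<And>x. x < n \<Longrightarrow> P1 x \<le> w ! (i + x)"
      proof -
        fix x assume x: "x < n"
        have ix: "i + x < length w" using L x by simp
        show "P1 x \<le> w ! (i + x)"
        proof (cases "x \<in> Q")
          case xQ: True
          have iH: "\<theta> \<le> w ! (i + x)" using QH[OF xQ] Hw[OF ix] by simp
          show ?thesis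
          proof (cases "x = bq")
            case True then show ?thesis using iH bt by simp
          next
            case False
            then obtain q where q: "q \<in> Q" "q \<noteq> tq" "x = q + d" using pred[OF xQ] by blast
            have qn: "q < n" using q Qn by auto
            have iq: "i + q < length w" using L qn by simp
            have "pim ?H d (i + q) = i + x" using pimF[OF QH[OF q(1)]] QH[OF xQ] q(3) by (simp add: add.assoc)
            then have "?f ! (i + q) = w ! (i + x)" using fn[OF iq] by simp
            then show ?thesis using A[OF qn] shift[OF q(1,2)] q(3) by simp
          qed
        next
          case False
          note o = out[OF x False]
          show ?thesis
          proof (cases "i + x \<in> ?H")
            case True
            then show ?thesis using Hw[OF ix] o by simp
          next
            case nH: False
            then show ?thesis using pimN[OF nH] fn[OF ix] o A[OF x] by simp
          qed
        qed
      qed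
      then show "i \<in> EmP n P1 w" unfolding EmP_def using L by simp
    qed
  qed
qed

lemma flip_ssP:
  assumes d: "d > 0"
  and Qn: "Q \<subseteq> {..<n}"
  and succ: "\<And>q. q \<in> Q \<Longrightarrow> q \<noteq> tq \<Longrightarrow> q + d \<in> Q"
  and pred: "\<And>x. x \<in> Q \<Longrightarrow> x \<noteq> bq \<Longrightarrow> \<exists>q\<in>Q. q \<noteq> tq \<and> x = q + d"
  and out: "\<And>x. x < n \<Longrightarrow> x \<notin> Q \<Longrightarrow> P1 x = P2 x \<and> P1 x < \<theta>"
  and inQ: "\<And>x. x \<in> Q \<Longrightarrow> \<theta> \<le> P1 x \<and> \<theta> \<le> P2 x"
  and bt: "P1 bq \<le> \<theta>" and tp: "P2 tq \<le> \<theta>"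
  and shift: "\<And>q. q \<in> Q \<Longrightarrow> q \<noteq> tq \<Longrightarrow> P2 q = P1 (q + d)"
  shows "ssP n P1 P2"
  unfolding ssP_def
  using flip_EmP[OF assms] rot_wp[OF d] by blast

fun pat :: "nat list \<Rightarrow> nat \<Rightarrow> (nat \<Rightarrow> nat) \<Rightarrow> nat \<Rightarrow> nat" where
  "pat [] b B = B"
| "pat (x # s) b B = pat s (Suc b) (B(x := Suc b))"

lemma pat_out: "z \<notin> set s \<Longrightarrow> pat s b B z = B z"
  by (induction s arbitrary: b B) auto

lemma pat_nth: "distinct s \<Longrightarrow> i < length s \<Longrightarrow> pat s b B (s ! i) = b + Suc i"
proof (induction s arbitrary: b B i)
  case Nil then show ?case by simp
next
  case (Cons x s)
  show ?case
  proof (cases i)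
    case 0 then show ?thesis using Cons.prems pat_out[of x s] by simp
  next
    case (Suc j) then show ?thesis using Cons.prems Cons.IH[of j] by simp
  qed
qed

lemma pat_ge: "distinct s \<Longrightarrow> z \<in> set s \<Longrightarrow> Suc b \<le> pat s b B z"
proof -
  assume ds: "distinct s" and z: "z \<in> set s"
  then obtain i where i: "i < length s" "s ! i = z" by (auto simp: in_set_conv_nth)
  then show ?thesis using pat_nth[OF ds i(1), of b B] by simp
qed

lemma AP_facts:
  assumes d: "(d::nat) > 0" and X: "X = (\<lambda>i. m + i*d)`{..<Suc N}"
  shows "X - {m} = (\<lambda>i. (m+d)+i*d)`{..<N}" "X - {m+N*d} = (\<lambda>i. m+i*d)`{..<N}"
    "(\<lambda>z. z - d)`(X - {m}) = X - {m+N*d}" "(\<lambda>z. z + d)`(X - {m+N*d}) = X - {m}"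
proof -
  show b: "X - {m} = (\<lambda>i. (m+d)+i*d)`{..<N}" unfolding X by (rule AP_remove_bot[OF d])
  show t: "X - {m+N*d} = (\<lambda>i. m+i*d)`{..<N}" unfolding X by (rule AP_remove_top[OF d])
  show "(\<lambda>z. z - d)`(X - {m}) = X - {m+N*d}" unfolding b t by (simp add: image_image)
  show "(\<lambda>z. z + d)`(X - {m+N*d}) = X - {m}" unfolding b t by (simp add: image_image algebra_simps)
qed

lemma tr_map_plus: "tr (set (map (\<lambda>z. z + d) xs)) (set xs)"
  unfolding tr_def by (intro exI[of _ 0] exI[of _ d]) (simp add: image_image)

lemma tr_map_minus: assumes "\<forall>z\<in>set xs. d \<le> z" shows "tr (set (map (\<lambda>z. z - d) xs)) (set xs)"
proof -
  have "(\<lambda>z. z + d) ` set (map (\<lambda>z. z - d) xs) = (\<lambda>z. z + 0) ` set xs"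
    using assms by (force simp: image_image)
  then show ?thesis unfolding tr_def by blast
qed

lemma flip_pat:
  assumes d: "d > 0" and N: "N \<ge> 1" and X: "X = (\<lambda>i. m + i*d) ` {..<Suc N}" and Xn: "X \<subseteq> {..<n}"
    and ds: "distinct s" and ss: "set s = X - {m}" and B: "\<And>z. z < n \<Longrightarrow> z \<notin> X \<Longrightarrow> B z \<le> b"
  shows "ssP n (pat (m # s) b B) (pat ((m + N*d) # map (\<lambda>z. z - d) s) b B)"
proof -
  define tq where "tq = m + N*d"
  define r where "r = map (\<lambda>z. z - d) s"
  note F = AP_facts[OF d X]
  have sge: "\<forall>z\<in>set s. d \<le> z" unfolding ss F(1) by auto
  have sr: "set r = X - {tq}" unfolding r_def tq_def using F(3) ss by simp
  have "inj_on (\<lambda>z. z - d) (set s)"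
  proof (rule inj_onI)
    fix x y assume xy: "x \<in> set s" "y \<in> set s" "x - d = y - d"
    have "d \<le> x" "d \<le> y" using sge xy by auto
    then show "x = y" using xy(3) by arith
  qed
  then have dr: "distinct r" unfolding r_def using ds by (simp add: distinct_map)
  have mX: "m \<in> X" "tq \<in> X" unfolding X tq_def by auto
  have mtq: "m \<noteq> tq" unfolding tq_def using d N by simp
  have d1: "distinct (m # s)" using ds ss by simp
  have d2: "distinct (tq # r)" using dr sr by simp
  have s1: "set (m # s) = X" using ss mX by auto
  have s2: "set (tq # r) = X" using sr mX by auto
  have "ssP n (pat (m # s) b B) (pat (tq # r) b B)"
  proof (rule flip_ssP[where Q = X and tq = tq and bq = m and \<theta> = "Suc b" and d = d])
    show "d > 0" by (rule d)
    show "X \<subseteq> {..<n}" by (rule Xn)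
    show "\<And>q. q \<in> X \<Longrightarrow> q \<noteq> tq \<Longrightarrow> q + d \<in> X"
    proof -
      fix q assume q: "q \<in> X" "q \<noteq> tq"
      then obtain i where i: "i < Suc N" "q = m + i*d" unfolding X by blast
      then have "i \<noteq> N" using q(2) tq_def by auto
      then have "Suc i < Suc N" using i by simp
      then show "q + d \<in> X" unfolding X using i by (intro image_eqI[of _ _ "Suc i"]) auto
    qed
    show "\<And>x. x \<in> X \<Longrightarrow> x \<noteq> m \<Longrightarrow> \<exists>q\<in>X. q \<noteq> tq \<and> x = q + d"
    proof -
      fix x assume x: "x \<in> X" "x \<noteq> m"
      then obtain i where i: "i < Suc N" "x = m + i*d" unfolding X by blast
      then obtain j where j: "i = Suc j" using x(2) by (cases i) auto
      have "m + j*d \<in> X" unfolding X using i j by auto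
      moreover have "m + j*d \<noteq> tq" unfolding tq_def using i j d by simp
      moreover have "x = m + j*d + d" using i j by simp
      ultimately show "\<exists>q\<in>X. q \<noteq> tq \<and> x = q + d" by blast
    qed
    show "\<And>x. x < n \<Longrightarrow> x \<notin> X \<Longrightarrow> pat (m # s) b B x = pat (tq # r) b B x \<and> pat (m # s) b B x < Suc b"
    proof -
      fix x assume x: "x < n" "x \<notin> X"
      have h1: "x \<notin> set (m # s)" using s1 x(2) by simp
      have h2: "x \<notin> set (tq # r)" using s2 x(2) by simp
      have "pat (m # s) b B x = B x" by (rule pat_out[OF h1])
      moreover have "pat (tq # r) b B x = B x" by (rule pat_out[OF h2])
      ultimately show "pat (m # s) b B x = pat (tq # r) b B x \<and> pat (m # s) b B x < Suc b" using B[OF x] by simp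
    qed
    show "\<And>x. x \<in> X \<Longrightarrow> Suc b \<le> pat (m # s) b B x \<and> Suc b \<le> pat (tq # r) b B x"
      using pat_ge[OF d1] pat_ge[OF d2] s1 s2 by blast
    show "pat (m # s) b B m \<le> Suc b" using pat_nth[OF d1, of 0 b B] by simp
    show "pat (tq # r) b B tq \<le> Suc b" using pat_nth[OF d2, of 0 b B] by simp
    show "\<And>q. q \<in> X \<Longrightarrow> q \<noteq> tq \<Longrightarrow> pat (tq # r) b B q = pat (m # s) b B (q + d)"
    proof -
      fix q assume q: "q \<in> X" "q \<noteq> tq"
      then have "q \<in> set r" using sr by simp
      then obtain i where i: "i < length r" "r ! i = q" by (auto simp: in_set_conv_nth)
      have ls: "length r = length s" unfolding r_def by simp
      have si: "s ! i \<in> set s" using i ls by simp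
      have "d \<le> s ! i" using sge si by blast
      moreover have "s ! i - d = q" using i ls unfolding r_def by simp
      ultimately have qd: "q + d = s ! i" by arith
      have "pat (tq # r) b B q = pat (tq # r) b B ((tq # r) ! Suc i)" using i by simp
      also have "\<dots> = b + Suc (Suc i)" using pat_nth[OF d2, of "Suc i"] i by simp
      also have "\<dots> = pat (m # s) b B ((m # s) ! Suc i)" using pat_nth[OF d1, of "Suc i"] i ls by simp
      also have "\<dots> = pat (m # s) b B (q + d)" using qd by simp
      finally show "pat (tq # r) b B q = pat (m # s) b B (q + d)" .
    qed
  qed
  then show ?thesis unfolding tq_def r_def .
qed

lemma drop_map_set: "set (drop j (map f xs)) = f ` set (drop j xs)"
  by (simp add: drop_map)

lemma suff:
  "\<And>s t b B. length s = k \<Longrightarrow> distinct s \<Longrightarrow> distinct t \<Longrightarrow> set s = set t \<Longrightarrow> set s \<subseteq> {..<n} \<Longrightarrow>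
     (\<forall>j. tr (set (drop j s)) (set (drop j t))) \<Longrightarrow> (\<forall>z<n. z \<notin> set s \<longrightarrow> B z \<le> b) \<Longrightarrow>
     ssP n (pat s b B) (pat t b B)"
proof (induction k)
  case 0
  then have "s = []" by simp
  moreover then have "t = []" using "0.prems"(4) by simp
  ultimately show ?case by (simp add: ssP_refl)
next
  case (Suc k)
  obtain x s' where s: "s = x # s'" using Suc.prems(1) by (cases s) auto
  have lt: "length t = length s"
    using distinct_card[OF Suc.prems(2)] distinct_card[OF Suc.prems(3)] Suc.prems(4) by simp
  obtain y t' where t: "t = y # t'" using lt Suc.prems(1) by (cases t) auto
  define X where "X = set s"
  have finX: "finite X" unfolding X_def by simp
  have xX: "x \<in> X" and yX: "y \<in> X" unfolding X_def using s t Suc.prems(4) by auto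
  have ss': "set s' = X - {x}" unfolding X_def using s Suc.prems(2) by auto
  have st': "set t' = X - {y}" unfolding X_def using t Suc.prems(3,4) by auto
  have ds': "distinct s'" "distinct t'" using s t Suc.prems(2,3) by auto
  have ls': "length s' = k" using s Suc.prems(1) by simp
  have drops: "\<forall>j. tr (set (drop j s')) (set (drop j t'))"
  proof
    fix j show "tr (set (drop j s')) (set (drop j t'))" using Suc.prems(6) s t by (metis drop_Suc_Cons)
  qed
  have Xn: "X \<subseteq> {..<n}" unfolding X_def using Suc.prems(5) .
  have BX: "\<And>z. z < n \<Longrightarrow> z \<notin> X \<Longrightarrow> B z \<le> b" using Suc.prems(7) X_def by blast
  show ?case
  proof (cases "x = y")
    case True
    have "ssP n (pat s' (Suc b) (B(x := Suc b))) (pat t' (Suc b) (B(x := Suc b)))"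
    proof (rule Suc.IH[OF ls' ds'])
      show "set s' = set t'" using ss' st' True by simp
      show "set s' \<subseteq> {..<n}" using ss' Xn by auto
      show "\<forall>j. tr (set (drop j s')) (set (drop j t'))" by (rule drops)
      show "\<forall>z<n. z \<notin> set s' \<longrightarrow> (B(x := Suc b)) z \<le> Suc b" using BX ss' by (auto intro: le_SucI)
    qed
    then show ?thesis using s t True by simp
  next
    case False
    have tr0: "tr (X - {x}) (X - {y})" using drops[rule_format, of 0] ss' st' by simp
    have eA: "endAP X x" "endAP X y" using tr_remove[OF finX xX yX False tr0] by auto
    obtain d N where dN: "d > 0" "N \<ge> 1" "X = {Min X + i*d | i. i \<le> N}"
      "x = Min X \<or> x = Min X + N*d" using eA(1) unfolding endAP_def by blast
    define m where "m = Min X"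
    have Xe: "X = (\<lambda>i. m + i*d)`{..<Suc N}" using dN(3) unfolding AP_set_eq m_def .
    have MX: "Max X = m + N*d" unfolding Xe by (rule AP_Max[OF dN(1)])
    have ymm: "y = m \<or> y = m + N*d" using endAP_minmax[OF eA(2)] MX m_def by auto
    have xmm: "x = m \<or> x = m + N*d" using dN(4) m_def by auto
    note F = AP_facts[OF dN(1) Xe]
    have mtq: "m \<noteq> m + N*d" using dN(1,2) by simp
    show ?thesis
    proof (cases "x = m")
      case xm: True
      then have yt: "y = m + N*d" using ymm False by auto
      define r' where "r' = map (\<lambda>z. z - d) s'"
      have sge: "\<forall>z\<in>set s'. d \<le> z" unfolding ss' xm F(1) by auto
      have S1: "ssP n (pat (m # s') b B) (pat ((m + N*d) # r') b B)"
        unfolding r'_def by (rule flip_pat[OF dN(1,2) Xe Xn ds'(1)]) (use ss' xm BX in auto)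
      have inj: "inj_on (\<lambda>z. z - d) (set s')"
      proof (rule inj_onI)
        fix a c assume ac: "a \<in> set s'" "c \<in> set s'" "a - d = c - d"
        have "d \<le> a" "d \<le> c" using sge ac by auto
        then show "a = c" using ac(3) by arith
      qed
      have S2: "ssP n (pat r' (Suc b) (B(y := Suc b))) (pat t' (Suc b) (B(y := Suc b)))"
      proof (rule Suc.IH)
        show "length r' = k" unfolding r'_def using ls' by simp
        show "distinct r'" unfolding r'_def using ds'(1) inj by (simp add: distinct_map)
        show "distinct t'" by (rule ds'(2))
        have sr: "set r' = X - {y}" unfolding r'_def yt using F(3) ss' xm by simp
        show "set r' = set t'" using sr st' by simp
        show "set r' \<subseteq> {..<n}" using sr Xn by auto
        show "\<forall>j. tr (set (drop j r')) (set (drop j t'))"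
        proof
          fix j
          have "set (drop j r') = set (map (\<lambda>z. z - d) (drop j s'))" unfolding r'_def by (simp add: drop_map)
          moreover have "\<forall>z\<in>set (drop j s'). d \<le> z" using sge by (meson in_set_dropD)
          ultimately have "tr (set (drop j r')) (set (drop j s'))" using tr_map_minus by simp
          then show "tr (set (drop j r')) (set (drop j t'))" using drops tr_trans by blast
        qed
        show "\<forall>z<n. z \<notin> set r' \<longrightarrow> (B(y := Suc b)) z \<le> Suc b" using BX sr by (auto intro: le_SucI)
      qed
      have "ssP n (pat s b B) (pat ((m + N*d) # r') b B)" using S1 s xm by simp
      moreover have "ssP n (pat ((m + N*d) # r') b B) (pat t b B)" using S2 t yt by simp
      ultimately show ?thesis by (rule ssP_trans)
    next
      case xn: False
      then have xt: "x = m + N*d" using xmm by auto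
      then have ym: "y = m" using ymm False by auto
      define r' where "r' = map (\<lambda>z. z + d) s'"
      have sr: "set r' = X - {m}" unfolding r'_def using F(4) ss' xt by simp
      have ds2: "distinct r'" unfolding r'_def using ds'(1) by (simp add: distinct_map inj_on_def)
      have back2: "map (\<lambda>z. z - d) r' = s'" unfolding r'_def by (simp add: map_idI)
      have S1: "ssP n (pat (m # r') b B) (pat ((m + N*d) # map (\<lambda>z. z - d) r') b B)"
        by (rule flip_pat[OF dN(1,2) Xe Xn ds2 sr]) (use BX in auto)
      have S1': "ssP n (pat s b B) (pat (m # r') b B)" using ssP_sym[OF S1] back2 s xt by simp
      have S2: "ssP n (pat r' (Suc b) (B(m := Suc b))) (pat t' (Suc b) (B(m := Suc b)))"
      proof (rule Suc.IH)
        show "length r' = k" unfolding r'_def using ls' by simp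
        show "distinct r'" by (rule ds2)
        show "distinct t'" by (rule ds'(2))
        show "set r' = set t'" using sr st' ym by simp
        show "set r' \<subseteq> {..<n}" using sr Xn by auto
        show "\<forall>j. tr (set (drop j r')) (set (drop j t'))"
        proof
          fix j
          have "set (drop j r') = set (map (\<lambda>z. z + d) (drop j s'))" unfolding r'_def by (simp add: drop_map)
          then have "tr (set (drop j r')) (set (drop j s'))" using tr_map_plus by simp
          then show "tr (set (drop j r')) (set (drop j t'))" using drops tr_trans by blast
        qed
        show "\<forall>z<n. z \<notin> set r' \<longrightarrow> (B(m := Suc b)) z \<le> Suc b" using BX sr by (auto intro: le_SucI)
      qed
      have "ssP n (pat (m # r') b B) (pat t b B)" using S2 t ym by simp
      then show ?thesis using S1' by (rule ssP_trans[rotated])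
    qed
  qed
qed

definition Ipat :: "nat set \<Rightarrow> nat set \<Rightarrow> nat set" where
  "Ipat P X = (\<Inter>e\<in>(\<lambda>x. Max P - x) ` P. (\<lambda>z. z + e) ` X)"

lemma Ipat_mem:
  assumes "finite P" "y \<in> Ipat P X" "x \<in> P"
  shows "Max P \<le> y + x \<and> y + x - Max P \<in> X"
proof -
  have "y \<in> (\<lambda>z. z + (Max P - x)) ` X" using assms(2,3) unfolding Ipat_def by blast
  then obtain z where z: "z \<in> X" "y = z + (Max P - x)" by blast
  have "x \<le> Max P" using assms(1,3) by simp
  then show ?thesis using z by simp
qed

lemma Ipat_map:
  assumes fP: "finite P" and y: "y \<in> Ipat P X"
  shows "inj_on (\<lambda>x. y + x - Max P) P" "(\<lambda>x. y + x - Max P) ` P \<subseteq> X"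
proof -
  show "inj_on (\<lambda>x. y + x - Max P) P"
  proof (rule inj_onI)
    fix a b assume ab: "a \<in> P" "b \<in> P" "y + a - Max P = y + b - Max P"
    then show "a = b" using Ipat_mem[OF fP y ab(1)] Ipat_mem[OF fP y ab(2)] by arith
  qed
  show "(\<lambda>x. y + x - Max P) ` P \<subseteq> X" using Ipat_mem[OF fP y] by blast
qed

lemma Ipat_c1:
  assumes fP: "finite P" and fX: "finite X" and lt: "card X < card P"
  shows "card (Ipat P X) = 0"
proof -
  have "Ipat P X = {}"
  proof (rule ccontr)
    assume "Ipat P X \<noteq> {}"
    then obtain y where y: "y \<in> Ipat P X" by blast
    have "card ((\<lambda>x. y + x - Max P) ` P) \<le> card X" using Ipat_map(2)[OF fP y] fX by (rule card_mono[rotated])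
    then have "card P \<le> card X" using card_image[OF Ipat_map(1)[OF fP y]] by simp
    then show False using lt by simp
  qed
  then show ?thesis by simp
qed

lemma Ipat_c4:
  assumes fP: "finite P" and fY: "finite Y" and eq: "card Y = card P" and ne: "card (Ipat P Y) \<noteq> 0"
  shows "tr P Y"
proof -
  have "Ipat P Y \<noteq> {}" using ne by auto
  then obtain y where y: "y \<in> Ipat P Y" by blast
  have sub: "(\<lambda>x. y + x - Max P) ` P \<subseteq> Y" by (rule Ipat_map(2)[OF fP y])
  have "card ((\<lambda>x. y + x - Max P) ` P) = card Y" using card_image[OF Ipat_map(1)[OF fP y]] eq by simp
  then have img: "(\<lambda>x. y + x - Max P) ` P = Y" using card_subset_eq[OF fY sub] by simp
  have "(\<lambda>z. z + Max P) ` Y = (\<lambda>x. x + y) ` P"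
  proof -
    have "(\<lambda>z. z + Max P) ` Y = (\<lambda>x. y + x - Max P + Max P) ` P" unfolding img[symmetric] by (simp add: image_image)
    also have "\<dots> = (\<lambda>x. x + y) ` P"
    proof (rule image_cong[OF refl])
      fix x assume "x \<in> P"
      then have "Max P \<le> y + x" using Ipat_mem[OF fP y] by blast
      then show "y + x - Max P + Max P = x + y" by simp
    qed
    finally show ?thesis .
  qed
  then show ?thesis unfolding tr_def by metis
qed

lemma Ipat_c3:
  assumes fP: "finite P" and ne: "P \<noteq> {}"
  shows "card (Ipat P P) \<noteq> 0"
proof -
  have "Max P \<in> Ipat P P" unfolding Ipat_def
  proof (rule INT_I)
    fix e assume "e \<in> (\<lambda>x. Max P - x) ` P"
    then obtain x where x: "x \<in> P" "e = Max P - x" by blast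
    have "x \<le> Max P" using fP x(1) by simp
    then show "Max P \<in> (\<lambda>z. z + e) ` P" using x by (intro image_eqI[of _ _ x]) auto
  qed
  moreover have "finite (Ipat P P)"
  proof -
    obtain x0 where "x0 \<in> P" using ne by blast
    then have "Ipat P P \<subseteq> (\<lambda>z. z + (Max P - x0)) ` P" unfolding Ipat_def by blast
    then show ?thesis using fP finite_subset by blast
  qed
  ultimately show ?thesis by auto
qed

lemma Ipat_c2:
  assumes ne: "P \<noteq> {}" and t: "tr X Y"
  shows "card (Ipat P X) = card (Ipat P Y)"
proof -
  obtain a b where ab: "(\<lambda>x. x + a) ` X = (\<lambda>x. x + b) ` Y" using t unfolding tr_def by blast
  define T where "T = (\<lambda>x. Max P - x) ` P"
  obtain j where j: "j \<in> T" using ne T_def by blast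
  have inj: "\<And>c. inj_on (\<lambda>z::nat. z + c) UNIV" by (simp add: inj_on_def)
  have "(\<lambda>z. z + a) ` Ipat P X = (\<Inter>e\<in>T. (\<lambda>z. z + a) ` ((\<lambda>z. z + e) ` X))"
    unfolding Ipat_def T_def[symmetric] by (rule image_INT[OF inj _ j]) simp
  also have "\<dots> = (\<Inter>e\<in>T. (\<lambda>z. z + e) ` ((\<lambda>z. z + a) ` X))" by (simp add: image_image algebra_simps)
  also have "\<dots> = (\<Inter>e\<in>T. (\<lambda>z. z + e) ` ((\<lambda>z. z + b) ` Y))" unfolding ab ..
  also have "\<dots> = (\<Inter>e\<in>T. (\<lambda>z. z + b) ` ((\<lambda>z. z + e) ` Y))" by (simp add: image_image algebra_simps)
  also have "\<dots> = (\<lambda>z. z + b) ` Ipat P Y"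
    unfolding Ipat_def T_def[symmetric] by (rule image_INT[OF inj _ j, symmetric]) simp
  finally have e: "(\<lambda>z. z + a) ` Ipat P X = (\<lambda>z. z + b) ` Ipat P Y" .
  have "card (Ipat P X) = card ((\<lambda>z. z + a) ` Ipat P X)" by (rule card_image[symmetric]) (simp add: inj_on_def)
  also have "\<dots> = card ((\<lambda>z. z + b) ` Ipat P Y)" unfolding e ..
  also have "\<dots> = card (Ipat P Y)" by (rule card_image) (simp add: inj_on_def)
  finally show ?thesis .
qed

lemma mobius_eq:
  fixes g1 g2 :: "nat set \<Rightarrow> int"
  assumes H: "\<And>E. finite E \<Longrightarrow> (\<Sum>T | T \<subseteq> E \<and> T \<noteq> {}. (-1) ^ (card T + 1) * g1 T) =
                                 (\<Sum>T | T \<subseteq> E \<and> T \<noteq> {}. (-1) ^ (card T + 1) * g2 T)"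
  shows "finite E \<Longrightarrow> E \<noteq> {} \<Longrightarrow> g1 E = g2 E"
proof (induction "card E" arbitrary: E rule: less_induct)
  case less
  define A where "A = {T. T \<subseteq> E \<and> T \<noteq> {}}"
  have finA: "finite A" unfolding A_def using less.prems(1) by simp
  have EA: "E \<in> A" unfolding A_def using less.prems by simp
  have rest: "\<And>T. T \<in> A - {E} \<Longrightarrow> (-1) ^ (card T + 1) * g1 T = (-1) ^ (card T + 1) * g2 T"
  proof -
    fix T assume T: "T \<in> A - {E}"
    then have "T \<subset> E" "T \<noteq> {}" unfolding A_def by auto
    then have "card T < card E" "finite T" using less.prems(1) by (auto intro: psubset_card_mono finite_subset)
    then have "g1 T = g2 T" using less.hyps \<open>T \<noteq> {}\<close> by blast
    then show "(-1) ^ (card T + 1) * g1 T = (-1) ^ (card T + 1) * g2 T" by simp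
  qed
  have "(\<Sum>T\<in>A. (-1) ^ (card T + 1) * g1 T) = (\<Sum>T\<in>A. (-1) ^ (card T + 1) * g2 T)"
    using H[OF less.prems(1)] unfolding A_def by simp
  moreover have "(\<Sum>T\<in>A. (-1) ^ (card T + 1) * g1 T) = (-1) ^ (card E + 1) * g1 E + (\<Sum>T\<in>A - {E}. (-1) ^ (card T + 1) * g1 T)"
    by (rule sum.remove[OF finA EA])
  moreover have "(\<Sum>T\<in>A. (-1) ^ (card T + 1) * g2 T) = (-1) ^ (card E + 1) * g2 E + (\<Sum>T\<in>A - {E}. (-1) ^ (card T + 1) * g2 T)"
    by (rule sum.remove[OF finA EA])
  ultimately have "(-1) ^ (card E + 1) * g1 E + (\<Sum>T\<in>A - {E}. (-1) ^ (card T + 1) * g1 T) =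
             (-1) ^ (card E + 1) * g2 E + (\<Sum>T\<in>A - {E}. (-1) ^ (card T + 1) * g2 T)"
    by simp
  moreover have "(\<Sum>T\<in>A - {E}. (-1) ^ (card T + 1) * g1 T) = (\<Sum>T\<in>A - {E}. (-1) ^ (card T + 1) * g2 T)"
    using rest by (rule sum.cong[OF refl])
  ultimately have "(-1) ^ (card E + 1) * g1 E = (-1) ^ (card E + 1) * (g2 E :: int)" by simp
  then show ?case by (simp add: power_eq_0_iff)
qed

lemma int_card_UN_indexed:
  assumes "finite A" "\<And>a. a \<in> A \<Longrightarrow> finite (X a)"
  shows "int (card (\<Union>(X ` A))) = (\<Sum>B | B \<subseteq> A \<and> B \<noteq> {}. (- 1) ^ (card B + 1) * int (card (\<Inter>(X ` B))))"
proof -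
  interpret Incl_Excl finite "int o card"
    proof qed (auto simp add: card_Un_disjnt)
  show ?thesis using restricted_indexed[of A X] assms by auto
qed

definition Mval :: "nat \<Rightarrow> (nat \<Rightarrow> nat) \<Rightarrow> nat set \<Rightarrow> nat \<Rightarrow> nat" where
  "Mval n P E p = Max (insert 1 ((\<lambda>e. P (p - e)) ` {e \<in> E. e \<le> p \<and> p < e + n}))"

definition Mw :: "nat \<Rightarrow> (nat \<Rightarrow> nat) \<Rightarrow> nat set \<Rightarrow> nat \<Rightarrow> nat list" where
  "Mw n P E L = map (Mval n P E) [0..<L]"

lemma Mw_ok:
  assumes fE: "finite E" and EL: "\<forall>e\<in>E. e + n \<le> L"
  shows "Mw n P E L \<in> pwords \<and> length (Mw n P E L) = L \<and> E \<subseteq> EmP n P (Mw n P E L)"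
proof -
  have fin: "\<And>p. finite (insert 1 ((\<lambda>e. P (p - e)) ` {e \<in> E. e \<le> p \<and> p < e + n}))" using fE by simp
  have pos: "\<And>p. 0 < Mval n P E p"
  proof -
    fix p have "1 \<le> Mval n P E p" unfolding Mval_def using fin[of p] by (simp add: Max_ge_iff)
    then show "0 < Mval n P E p" by simp
  qed
  have "E \<subseteq> EmP n P (Mw n P E L)"
  proof
    fix e assume e: "e \<in> E"
    have "\<And>x. x < n \<Longrightarrow> P x \<le> Mw n P E L ! (e + x)"
    proof -
      fix x assume x: "x < n"
      have exL: "e + x < L" using EL e x by fastforce
      have "P x \<in> insert 1 ((\<lambda>e'. P (e + x - e')) ` {e' \<in> E. e' \<le> e + x \<and> e + x < e' + n})"
        using e x by (intro insertI2 image_eqI[of _ _ e]) auto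
      then have "P x \<le> Mval n P E (e + x)" unfolding Mval_def using fin[of "e + x"] by simp
      then show "P x \<le> Mw n P E L ! (e + x)" unfolding Mw_def using exL by simp
    qed
    then show "e \<in> EmP n P (Mw n P E L)" unfolding EmP_def Mw_def using EL e by simp
  qed
  then show ?thesis unfolding Mw_def pwords_def using pos by auto
qed

lemma Mw_le:
  assumes fE: "finite E" and w: "w \<in> pwords" "length w = L" and Ew: "E \<subseteq> EmP n P w"
  shows "sum_list (Mw n P E L) \<le> sum_list w"
proof -
  have le: "\<And>p. p < L \<Longrightarrow> Mval n P E p \<le> w ! p"
  proof -
    fix p assume p: "p < L"
    have "1 \<le> w ! p" using w p unfolding pwords_def by (simp add: Suc_le_eq)
    moreover have "\<forall>a\<in>(\<lambda>e. P (p - e)) ` {e \<in> E. e \<le> p \<and> p < e + n}. a \<le> w ! p"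
    proof
      fix a assume "a \<in> (\<lambda>e. P (p - e)) ` {e \<in> E. e \<le> p \<and> p < e + n}"
      then obtain e where e: "e \<in> E" "e \<le> p" "p < e + n" "a = P (p - e)" by blast
      have "\<forall>x<n. P x \<le> w ! (e + x)" using Ew e(1) unfolding EmP_def by blast
      moreover have "p - e < n" using e by simp
      ultimately have "P (p - e) \<le> w ! (e + (p - e))" by blast
      then show "a \<le> w ! p" using e by simp
    qed
    ultimately show "Mval n P E p \<le> w ! p" unfolding Mval_def using fE by simp
  qed
  have "sum_list (Mw n P E L) = (\<Sum>p<L. Mval n P E p)"
    unfolding Mw_def sum_list_sum_nth by (simp add: atLeast0LessThan)
  also have "\<dots> \<le> (\<Sum>p<L. w ! p)" using le by (intro sum_mono) simp
  also have "\<dots> = sum_list w" unfolding sum_list_sum_nth using w(2) by (simp add: atLeast0LessThan)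
  finally show ?thesis .
qed

lemma ss_norm:
  assumes ss: "ssP n P1 P2" and fE: "finite E" and EL: "\<forall>e\<in>E. e + n \<le> L"
  shows "sum_list (Mw n P2 E L) \<le> sum_list (Mw n P1 E L)"
proof -
  obtain f where f: "weight_preserving f" "\<forall>w\<in>pwords. EmP n P1 w = EmP n P2 (f w)"
    using ss unfolding ssP_def by blast
  define w0 where "w0 = Mw n P1 E L"
  have w0: "w0 \<in> pwords" "length w0 = L" "E \<subseteq> EmP n P1 w0" using Mw_ok[OF fE EL] w0_def by auto
  have fw: "f w0 \<in> pwords" using f(1) w0(1) unfolding weight_preserving_def bij_betw_def by blast
  have lw: "length (f w0) = L" "wnorm (f w0) = wnorm w0" using f(1) w0 unfolding weight_preserving_def by auto
  have "E \<subseteq> EmP n P2 (f w0)" using f(2) w0 by simp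
  then have "sum_list (Mw n P2 E L) \<le> sum_list (f w0)" using Mw_le[OF fE fw lw(1)] by simp
  then show ?thesis using lw(2) w0_def unfolding wnorm_def by simp
qed

lemma ss_norm_eq:
  assumes ss: "ssP n P1 P2" and fE: "finite E" and EL: "\<forall>e\<in>E. e + n \<le> L"
  shows "sum_list (Mw n P1 E L) = sum_list (Mw n P2 E L)"
  using ss_norm[OF ss fE EL] ss_norm[OF ssP_sym[OF ss] fE EL] by simp

lemma Max_count:
  assumes fA: "finite A" and An: "A \<subseteq> {1..n}"
  shows "Max (insert 1 A) = 1 + card {m \<in> {2..n}. \<exists>a\<in>A. m \<le> a}"
proof -
  define M where "M = Max (insert 1 A)"
  have M1: "1 \<le> M" unfolding M_def using fA by simp
  have Mn: "M \<in> insert 1 A" unfolding M_def by (rule Max_in) (use fA in auto)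
  have Mge: "\<And>a. a \<in> A \<Longrightarrow> a \<le> M" unfolding M_def using fA by simp
  have "{m \<in> {2..n}. \<exists>a\<in>A. m \<le> a} = {2..M}"
  proof
    show "{m \<in> {2..n}. \<exists>a\<in>A. m \<le> a} \<subseteq> {2..M}"
    proof
      fix m assume "m \<in> {m \<in> {2..n}. \<exists>a\<in>A. m \<le> a}"
      then obtain a where "a \<in> A" "m \<le> a" "2 \<le> m" by auto
      then show "m \<in> {2..M}" using Mge[of a] by simp
    qed
    show "{2..M} \<subseteq> {m \<in> {2..n}. \<exists>a\<in>A. m \<le> a}"
    proof
      fix m assume m: "m \<in> {2..M}"
      then have "M \<noteq> 1" by auto
      then have MA: "M \<in> A" using Mn by simp
      then have "M \<le> n" using An by auto
      then show "m \<in> {m \<in> {2..n}. \<exists>a\<in>A. m \<le> a}" using m MA by auto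
    qed
  qed
  then show ?thesis using M1 M_def by simp
qed

definition Uset :: "nat list \<Rightarrow> nat set \<Rightarrow> nat \<Rightarrow> nat set" where
  "Uset u E m = (\<Union>e\<in>E. (\<lambda>z. z + e) ` Sset u m)"

lemma card_filter_sum: "finite A \<Longrightarrow> card {x \<in> A. Q x} = (\<Sum>x\<in>A. if Q x then 1 else 0)"
proof -
  assume f: "finite A"
  have "card {x \<in> A. Q x} = (\<Sum>x\<in>{x \<in> A. Q x}. 1)" by (rule card_eq_sum)
  also have "\<dots> = (\<Sum>x\<in>A. if Q x then 1 else 0)" by (rule sum.inter_filter[OF f])
  finally show ?thesis .
qed

lemma Mw_formula:
  assumes u: "u \<in> perms n" and fE: "finite E" and EL: "\<forall>e\<in>E. e + n \<le> L"
  shows "sum_list (Mw n (\<lambda>x. u ! x) E L) = L + (\<Sum>m\<in>{2..n}. card (Uset u E m))"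
proof -
  have lu: "length u = n" using perms_props(1)[OF u] .
  have val: "\<And>p. p < L \<Longrightarrow> Mval n (\<lambda>x. u ! x) E p = 1 + (\<Sum>m\<in>{2..n}. if p \<in> Uset u E m then 1 else 0)"
  proof -
    fix p assume p: "p < L"
    define A where "A = (\<lambda>e. u ! (p - e)) ` {e \<in> E. e \<le> p \<and> p < e + n}"
    have fA: "finite A" unfolding A_def using fE by simp
    have An: "A \<subseteq> {1..n}"
    proof
      fix a assume "a \<in> A"
      then obtain e where e: "e \<le> p" "p < e + n" "a = u ! (p - e)" unfolding A_def by blast
      have "p - e < n" using e by simp
      then show "a \<in> {1..n}" using nth_range[OF u] e by simp
    qed
    have iff: "\<And>m. (\<exists>a\<in>A. m \<le> a) \<longleftrightarrow> p \<in> Uset u E m"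
    proof
      fix m assume "\<exists>a\<in>A. m \<le> a"
      then obtain e where e: "e \<in> E" "e \<le> p" "p < e + n" "m \<le> u ! (p - e)" unfolding A_def by blast
      have "p - e \<in> Sset u m" unfolding Sset_def using e lu by simp
      then have "p \<in> (\<lambda>z. z + e) ` Sset u m" using e(2) by (intro image_eqI[of _ _ "p - e"]) auto
      then show "p \<in> Uset u E m" unfolding Uset_def using e(1) by blast
    next
      fix m assume "p \<in> Uset u E m"
      then obtain e z where ez: "e \<in> E" "z \<in> Sset u m" "p = z + e" unfolding Uset_def by blast
      then have z: "z < n" "m \<le> u ! z" unfolding Sset_def using lu by auto
      have "u ! (p - e) \<in> A" unfolding A_def using ez z by (intro image_eqI[of _ _ e]) auto
      then show "\<exists>a\<in>A. m \<le> a" using z ez by auto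
    qed
    have "Mval n (\<lambda>x. u ! x) E p = 1 + card {m \<in> {2..n}. \<exists>a\<in>A. m \<le> a}"
      unfolding Mval_def A_def[symmetric] by (rule Max_count[OF fA An])
    also have "\<dots> = 1 + card {m \<in> {2..n}. p \<in> Uset u E m}" using iff by simp
    also have "\<dots> = 1 + (\<Sum>m\<in>{2..n}. if p \<in> Uset u E m then 1 else 0)" using card_filter_sum[of "{2..n}" "\<lambda>m. p \<in> Uset u E m"] by simp
    finally show "Mval n (\<lambda>x. u ! x) E p = 1 + (\<Sum>m\<in>{2..n}. if p \<in> Uset u E m then 1 else 0)" .
  qed
  have Usub: "\<And>m. Uset u E m \<subseteq> {..<L}"
  proof
    fix m q assume "q \<in> Uset u E m"
    then obtain e z where ez: "e \<in> E" "z \<in> Sset u m" "q = z + e" unfolding Uset_def by blast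
    then have "z < n" unfolding Sset_def using lu by auto
    then show "q \<in> {..<L}" using EL ez by fastforce
  qed
  have "sum_list (Mw n (\<lambda>x. u ! x) E L) = (\<Sum>p<L. Mval n (\<lambda>x. u ! x) E p)"
    unfolding Mw_def sum_list_sum_nth by (simp add: atLeast0LessThan)
  also have "\<dots> = (\<Sum>p<L. 1 + (\<Sum>m\<in>{2..n}. if p \<in> Uset u E m then 1 else 0))"
    using val by (intro sum.cong) auto
  also have "\<dots> = L + (\<Sum>p<L. \<Sum>m\<in>{2..n}. if p \<in> Uset u E m then 1 else 0)"
    unfolding sum.distrib by simp
  also have "(\<Sum>p<L. \<Sum>m\<in>{2..n}. if p \<in> Uset u E m then 1 else 0) = (\<Sum>m\<in>{2..n}. \<Sum>p<L. if p \<in> Uset u E m then 1 else 0)"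
    by (rule sum.swap)
  also have "\<dots> = (\<Sum>m\<in>{2..n}. card (Uset u E m))"
  proof (rule sum.cong[OF refl])
    fix m
    have "(\<Sum>p<L. if p \<in> Uset u E m then 1 else 0) = card {p \<in> {..<L}. p \<in> Uset u E m}"
      using card_filter_sum[of "{..<L}" "\<lambda>p. p \<in> Uset u E m"] by simp
    also have "{p \<in> {..<L}. p \<in> Uset u E m} = Uset u E m" using Usub[of m] by auto
    finally show "(\<Sum>p<L. if p \<in> Uset u E m then 1 else 0) = card (Uset u E m)" .
  qed
  finally show ?thesis .
qed

lemma F1_eq:
  assumes u: "u \<in> perms n" and v: "v \<in> perms n" and ss: "ssP n (\<lambda>x. u ! x) (\<lambda>x. v ! x)" and fE: "finite E"
  shows "(\<Sum>m\<in>{2..n}. card (Uset u E m)) = (\<Sum>m\<in>{2..n}. card (Uset v E m))"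
proof -
  define L where "L = Max (insert 0 E) + n"
  have EL: "\<forall>e\<in>E. e + n \<le> L" unfolding L_def using fE by simp
  show ?thesis using ss_norm_eq[OF ss fE EL] Mw_formula[OF u fE EL] Mw_formula[OF v fE EL] by simp
qed

definition G2 :: "nat \<Rightarrow> nat list \<Rightarrow> nat set \<Rightarrow> int" where
  "G2 n u T = (\<Sum>m\<in>{2..n}. int (card (\<Inter>e\<in>T. (\<lambda>z. z + e) ` Sset u m)))"

lemma Sset_finite: "finite (Sset u m)" unfolding Sset_def by simp

lemma F1_IE:
  assumes fE: "finite E"
  shows "int (\<Sum>m\<in>{2..n}. card (Uset u E m)) = (\<Sum>T | T \<subseteq> E \<and> T \<noteq> {}. (-1) ^ (card T + 1) * G2 n u T)"
proof -
  have "int (\<Sum>m\<in>{2..n}. card (Uset u E m)) = (\<Sum>m\<in>{2..n}. int (card (Uset u E m)))" by simp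
  also have "\<dots> = (\<Sum>m\<in>{2..n}. \<Sum>T | T \<subseteq> E \<and> T \<noteq> {}. (-1) ^ (card T + 1) * int (card (\<Inter>e\<in>T. (\<lambda>z. z + e) ` Sset u m)))"
  proof (rule sum.cong[OF refl])
    fix m
    show "int (card (Uset u E m)) = (\<Sum>T | T \<subseteq> E \<and> T \<noteq> {}. (-1) ^ (card T + 1) * int (card (\<Inter>e\<in>T. (\<lambda>z. z + e) ` Sset u m)))"
      unfolding Uset_def by (rule int_card_UN_indexed[OF fE]) (simp add: Sset_finite)
  qed
  also have "\<dots> = (\<Sum>T | T \<subseteq> E \<and> T \<noteq> {}. \<Sum>m\<in>{2..n}. (-1) ^ (card T + 1) * int (card (\<Inter>e\<in>T. (\<lambda>z. z + e) ` Sset u m)))"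
    by (rule sum.swap)
  also have "\<dots> = (\<Sum>T | T \<subseteq> E \<and> T \<noteq> {}. (-1) ^ (card T + 1) * G2 n u T)"
    unfolding G2_def by (simp add: sum_distrib_left)
  finally show ?thesis .
qed

lemma G2_eq:
  assumes u: "u \<in> perms n" and v: "v \<in> perms n" and ss: "ssP n (\<lambda>x. u ! x) (\<lambda>x. v ! x)"
  shows "finite T \<Longrightarrow> T \<noteq> {} \<Longrightarrow> G2 n u T = G2 n v T"
proof (rule mobius_eq)
  fix E :: "nat set" assume fE: "finite E"
  show "(\<Sum>T | T \<subseteq> E \<and> T \<noteq> {}. (-1) ^ (card T + 1) * G2 n u T) = (\<Sum>T | T \<subseteq> E \<and> T \<noteq> {}. (-1) ^ (card T + 1) * G2 n v T)"
    using F1_IE[where n=n and u=u, OF fE] F1_IE[where n=n and u=v, OF fE] F1_eq[OF u v ss fE] by simp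
qed

lemma card_Sset:
  assumes u: "u \<in> perms n" and m: "1 \<le> m"
  shows "card (Sset u m) = n + 1 - m"
proof -
  have "Sset u m = set (drop (m - 1) (sl u))" using set_drop_sl[OF u, of "m - 1"] m by simp
  moreover have "distinct (drop (m - 1) (sl u))" using sl_props(2)[OF u] by simp
  ultimately have "card (Sset u m) = length (drop (m - 1) (sl u))" by (simp add: distinct_card)
  then show ?thesis using sl_props(1)[OF u] m by simp
qed

lemma nec_tr:
  assumes u: "u \<in> perms n" and v: "v \<in> perms n"
    and G: "\<And>T. finite T \<Longrightarrow> T \<noteq> {} \<Longrightarrow> G2 n u T = G2 n v T"
  shows "1 \<le> k \<Longrightarrow> k \<le> n \<Longrightarrow> tr (Sset u k) (Sset v k)"
proof (induction k rule: less_induct)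
  case (less k)
  show ?case
  proof (cases "k = 1")
    case True then show ?thesis using Sset_one[OF u] Sset_one[OF v] tr_refl by simp
  next
    case False
    then have k2: "2 \<le> k" using less.prems by simp
    define P where "P = Sset u k"
    have fP: "finite P" unfolding P_def by (rule Sset_finite)
    have cP: "card P = n + 1 - k" unfolding P_def using card_Sset[OF u] less.prems by simp
    have neP: "P \<noteq> {}" using cP less.prems fP by auto
    define T where "T = (\<lambda>x. Max P - x) ` P"
    have fT: "finite T" "T \<noteq> {}" unfolding T_def using fP neP by auto
    define D where "D m = int (card (Ipat P (Sset u m))) - int (card (Ipat P (Sset v m)))" for m
    have "G2 n u T - G2 n v T = (\<Sum>m\<in>{2..n}. D m)"
      unfolding G2_def D_def T_def Ipat_def by (simp add: sum_subtractf)
    then have S0: "(\<Sum>m\<in>{2..n}. D m) = 0" using G[OF fT] by simp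
    have Z: "\<And>m. m \<in> {2..n} - {k} \<Longrightarrow> D m = 0"
    proof -
      fix m assume m: "m \<in> {2..n} - {k}"
      show "D m = 0"
      proof (cases "m < k")
        case True
        have "tr (Sset u m) (Sset v m)" using less.IH[OF True] m by simp
        then show ?thesis unfolding D_def using Ipat_c2[OF neP] by simp
      next
        case False
        then have mk: "k < m" using m by simp
        have cu: "card (Sset u m) < card P" using card_Sset[OF u, of m] m cP mk less.prems by simp
        have cv: "card (Sset v m) < card P" using card_Sset[OF v, of m] m cP mk less.prems by simp
        show ?thesis unfolding D_def using Ipat_c1[OF fP Sset_finite cu] Ipat_c1[OF fP Sset_finite cv] by simp
      qed
    qed
    have kin: "k \<in> {2..n}" using k2 less.prems by simp
    have "(\<Sum>m\<in>{2..n}. D m) = D k + (\<Sum>m\<in>{2..n} - {k}. D m)" by (rule sum.remove[OF _ kin]) simp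
    moreover have "(\<Sum>m\<in>{2..n} - {k}. D m) = 0" using Z by (rule sum.neutral[OF ballI])
    ultimately have "D k = 0" using S0 by simp
    then have "card (Ipat P (Sset v k)) = card (Ipat P P)" unfolding D_def P_def by simp
    then have "card (Ipat P (Sset v k)) \<noteq> 0" using Ipat_c3[OF fP neP] by simp
    moreover have "card (Sset v k) = card P" using card_Sset[OF v] less.prems cP by simp
    ultimately have "tr P (Sset v k)" using Ipat_c4[OF fP Sset_finite] by blast
    then show ?thesis unfolding P_def .
  qed
qed

lemma necessity:
  assumes u: "u \<in> perms n" and v: "v \<in> perms n" and ss: "ssP n (\<lambda>x. u ! x) (\<lambda>x. v ! x)"
  shows "\<forall>j. tr (set (drop j (sl u))) (set (drop j (sl v)))"
proof
  fix j
  show "tr (set (drop j (sl u))) (set (drop j (sl v)))"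
  proof (cases "j < n")
    case True
    have "tr (Sset u (Suc j)) (Sset v (Suc j))" using nec_tr[OF u v G2_eq[OF u v ss]] True by simp
    then show ?thesis using set_drop_sl[OF u] set_drop_sl[OF v] by simp
  next
    case False
    then have "drop j (sl u) = []" "drop j (sl v) = []" using sl_props(1)[OF u] sl_props(1)[OF v] by auto
    then show ?thesis using tr_refl by simp
  qed
qed

lemma Em_EmP: "Em u w = Suc ` EmP (length u) (\<lambda>x. u ! x) w"
proof (rule set_eqI)
  fix j
  show "j \<in> Em u w \<longleftrightarrow> j \<in> Suc ` EmP (length u) (\<lambda>x. u ! x) w"
  proof
    assume j: "j \<in> Em u w"
    then have j1: "1 \<le> j" and jl: "j + length u - 1 \<le> length w"
      and jk: "\<forall>k\<in>{1..length u}. u ! (k - 1) \<le> w ! (j + k - 2)" unfolding Em_def by auto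
    obtain i where i: "j = Suc i" using j1 by (cases j) auto
    have "\<forall>x<length u. u ! x \<le> w ! (i + x)"
    proof (intro allI impI)
      fix x assume "x < length u"
      then have "Suc x \<in> {1..length u}" by simp
      then show "u ! x \<le> w ! (i + x)" using jk i by fastforce
    qed
    then have "i \<in> EmP (length u) (\<lambda>x. u ! x) w" unfolding EmP_def using jl i by simp
    then show "j \<in> Suc ` EmP (length u) (\<lambda>x. u ! x) w" using i by blast
  next
    assume "j \<in> Suc ` EmP (length u) (\<lambda>x. u ! x) w"
    then obtain i where i: "j = Suc i" "i + length u \<le> length w" "\<forall>x<length u. u ! x \<le> w ! (i + x)"
      unfolding EmP_def by blast
    have "\<forall>k\<in>{1..length u}. u ! (k - 1) \<le> w ! (j + k - 2)"
    proof
      fix k assume k: "k \<in> {1..length u}"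
      then have "k - 1 < length u" by auto
      then have "u ! (k - 1) \<le> w ! (i + (k - 1))" using i(3) by blast
      moreover have "j + k - 2 = i + (k - 1)" using k i(1) by auto
      ultimately show "u ! (k - 1) \<le> w ! (j + k - 2)" by simp
    qed
    then show "j \<in> Em u w" unfolding Em_def using i by simp
  qed
qed

lemma ss_wilf_ssP:
  assumes "length u = n" "length v = n"
  shows "ss_wilf u v \<longleftrightarrow> ssP n (\<lambda>x. u ! x) (\<lambda>x. v ! x)"
proof -
  have "\<And>w w'. Em u w = Em v w' \<longleftrightarrow> EmP n (\<lambda>x. u ! x) w = EmP n (\<lambda>x. v ! x) w'"
    unfolding Em_EmP assms by (simp add: inj_image_eq_iff)
  then show ?thesis unfolding ss_wilf_def ssP_def by simp
qed

lemma pat_sl: assumes u: "u \<in> perms n" and x: "x < n" shows "pat (sl u) 0 B x = u ! x"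
proof -
  have r: "1 \<le> u ! x \<and> u ! x \<le> n" using nth_range[OF u x] .
  define i where "i = u ! x - 1"
  have i: "i < n" "Suc i = u ! x" unfolding i_def using r by auto
  have "sl u ! i = x" using sl_nth[OF u i(1)] pos_nth[OF u x] i(2) by simp
  moreover have "pat (sl u) 0 B (sl u ! i) = Suc i" using pat_nth[OF sl_props(2)[OF u], of i 0 B] sl_props(1)[OF u] i by simp
  ultimately show ?thesis using i by simp
qed

lemma class_eq:
  assumes u: "u \<in> perms n"
  shows "{v \<in> perms n. ss_wilf u v} = {v \<in> perms n. \<forall>j. tr (set (drop j (sl u))) (set (drop j (sl v)))}"
proof (rule Collect_cong)
  fix v
  show "(v \<in> perms n \<and> ss_wilf u v) = (v \<in> perms n \<and> (\<forall>j. tr (set (drop j (sl u))) (set (drop j (sl v)))))"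
  proof (cases "v \<in> perms n")
    case v: True
    have eq: "ss_wilf u v \<longleftrightarrow> ssP n (\<lambda>x. u ! x) (\<lambda>x. v ! x)"
      by (rule ss_wilf_ssP) (use perms_props(1)[OF u] perms_props(1)[OF v] in auto)
    have "(\<forall>j. tr (set (drop j (sl u))) (set (drop j (sl v)))) \<Longrightarrow> ssP n (\<lambda>x. u ! x) (\<lambda>x. v ! x)"
    proof -
      assume T: "\<forall>j. tr (set (drop j (sl u))) (set (drop j (sl v)))"
      have "ssP n (pat (sl u) 0 (\<lambda>_. 0)) (pat (sl v) 0 (\<lambda>_. 0))"
      proof (rule suff)
        show "length (sl u) = n" using sl_props(1)[OF u] .
        show "distinct (sl u)" using sl_props(2)[OF u] .
        show "distinct (sl v)" using sl_props(2)[OF v] .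
        show "set (sl u) = set (sl v)" using sl_props(3)[OF u] sl_props(3)[OF v] by simp
        show "set (sl u) \<subseteq> {..<n}" using sl_props(3)[OF u] by simp
        show "\<forall>j. tr (set (drop j (sl u))) (set (drop j (sl v)))" by (rule T)
        show "\<forall>z<n. z \<notin> set (sl u) \<longrightarrow> 0 \<le> (0::nat)" by simp
      qed
      then show "ssP n (\<lambda>x. u ! x) (\<lambda>x. v ! x)" by (rule ssP_cong) (simp_all add: pat_sl[OF u] pat_sl[OF v])
    qed
    then show ?thesis using eq necessity[OF u v] v by blast
  next
    case False then show ?thesis by simp
  qed
qed

lemma endAP_card: assumes "endAP X x" shows "2 \<le> card X"
proof -
  obtain d N where dN: "d > 0" "N \<ge> 1" "X = {Min X + i*d | i. i \<le> N}"
    using assms unfolding endAP_def by blast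
  define m where "m = Min X"
  have X: "X = (\<lambda>i. m + i*d)`{..<Suc N}" using dN(3) unfolding AP_set_eq m_def .
  then have "card X = Suc N" using card_AP[OF dN(1)] by simp
  then show ?thesis using dN(2) by simp
qed

lemma Delta_small: "card X \<le> 1 \<Longrightarrow> Delta X = []"
  unfolding Delta_def Let_def by simp

lemma prod_if_pow: "finite A \<Longrightarrow> (\<Prod>i\<in>A. if Q i then 2 else 1) = (2::nat) ^ card {i \<in> A. Q i}"
proof -
  assume f: "finite A"
  have "(\<Prod>i\<in>A. if Q i then 2 else 1) = (\<Prod>i\<in>A \<inter> {x. Q x}. (2::nat)) * (\<Prod>i\<in>A \<inter> - {x. Q x}. 1)"
    by (rule prod.If_cases[OF f])
  also have "\<dots> = 2 ^ card (A \<inter> {x. Q x})" by simp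
  also have "A \<inter> {x. Q x} = {i \<in> A. Q i}" by auto
  finally show ?thesis .
qed

lemma set_drop_remove:
  assumes "distinct s" "i < length s"
  shows "set (drop i s) - {s ! i} = set (drop (Suc i) s)" "s ! i \<in> set (drop i s)"
proof -
  have e: "drop i s = s ! i # drop (Suc i) s" using assms(2) by (rule Cons_nth_drop_Suc[symmetric])
  have "distinct (drop i s)" using assms(1) by simp
  then have "s ! i \<notin> set (drop (Suc i) s)" unfolding e by simp
  then show "set (drop i s) - {s ! i} = set (drop (Suc i) s)" unfolding e by auto
  show "s ! i \<in> set (drop i s)" unfolding e by simp
qed

lemma D_val:
  assumes u: "u \<in> perms n" and i: "1 \<le> i" "i < n"
  shows "pvec (perm_inv u) ! (i - 1) = Delta (Sset u i)"
proof -
  have l: "length (perm_inv u) = n" unfolding perm_inv_sl using sl_props(1)[OF u] by simp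
  have "pvec (perm_inv u) ! (i - 1) = Delta_i (perm_inv u) i"
    unfolding pvec_def l using i by simp
  also have "\<dots> = Delta (set (drop (i - 1) (map Suc (sl u))))" unfolding Delta_i_def perm_inv_sl ..
  also have "\<dots> = Delta (Suc ` set (drop (i - 1) (sl u)))" by (simp add: drop_map)
  also have "\<dots> = Delta (set (drop (i - 1) (sl u)))" by (rule Delta_Suc) simp
  also have "set (drop (i - 1) (sl u)) = Sset u i" using set_drop_sl[OF u, of "i - 1"] i by simp
  finally show ?thesis .
qed

theorem mainTheorem3:
  fixes n :: nat and u :: "nat list"
  assumes "n \<ge> 2" and "u \<in> perms n"
  defines "D \<equiv> (\<lambda>i. if i = n then [] else pvec (perm_inv u) ! (i - 1))"
  shows "card {v \<in> perms n. ss_wilf u v} =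
         2 ^ card {i \<in> {1..n-1}. \<exists>d>0. D i = replicate (n - i) d \<and>
                                          D (i + 1) = replicate (n - i - 1) d}"
proof -
  note u = assms(2)
  define s where "s = sl u"
  have sp: "length s = n" "distinct s" "set s = {..<n}" unfolding s_def using sl_props[OF u] by auto
  define Q where "Q t = (\<forall>j. tr (set (drop j s)) (set (drop j t)))" for t
  have C: "{v \<in> perms n. ss_wilf u v} = {v \<in> perms n. Q (sl v)}" unfolding Q_def s_def by (rule class_eq[OF u])
  have img: "sl ` {v \<in> perms n. Q (sl v)} = Kset s {..<n}"
  proof -
    have "sl ` {v \<in> perms n. Q (sl v)} = {t \<in> sl ` perms n. Q t}" by auto
    also have "\<dots> = Kset s {..<n}" unfolding sl_image Kset_def Q_def using sp(1) by auto
    finally show ?thesis .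
  qed
  have inj: "inj_on sl {v \<in> perms n. Q (sl v)}" using sl_inj by (rule inj_on_subset) auto
  have c1: "card {v \<in> perms n. ss_wilf u v} = card (Kset s {..<n})"
    unfolding C using card_image[OF inj] img by simp
  have c2: "card (Kset s {..<n}) = (\<Prod>i<n. ch (set (drop i s)) (s ! i))"
    using Kset_card[OF sp(2)] sp(1,3) tr_refl by simp
  define Cth where "Cth i = (\<exists>d>0. D i = replicate (n - i) d \<and> D (i + 1) = replicate (n - i - 1) d)" for i
  have Xs: "\<And>i. set (drop i s) = Sset u (Suc i)" unfolding s_def using set_drop_sl[OF u] by simp
  have cX: "\<And>i. i < n \<Longrightarrow> card (set (drop i s)) = n - i" unfolding Xs using card_Sset[OF u] by simp
  have Dv: "\<And>i. 1 \<le> i \<Longrightarrow> i \<le> n \<Longrightarrow> D i = Delta (Sset u i)"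
  proof -
    fix i assume i: "1 \<le> i" "i \<le> n"
    show "D i = Delta (Sset u i)"
    proof (cases "i = n")
      case True
      have "card (Sset u i) = 1" using card_Sset[OF u, of i] i True by simp
      then show ?thesis unfolding D_def using True Delta_small by simp
    next
      case False
      then show ?thesis unfolding D_def using D_val[OF u] i by simp
    qed
  qed
  have chv: "\<And>i. i < n - 1 \<Longrightarrow> ch (set (drop i s)) (s ! i) = (if Cth (Suc i) then 2 else 1)"
  proof -
    fix i assume i: "i < n - 1"
    have iN: "i < length s" using i sp(1) by simp
    note R = set_drop_remove[OF sp(2) iN]
    have c: "card (set (drop i s)) = n - i" using cX i by simp
    have "ch (set (drop i s)) (s ! i) = (if endAP (set (drop i s)) (s ! i) then 2 else 1)"
      using ch_val R(2) by simp
    moreover have "endAP (set (drop i s)) (s ! i) \<longleftrightarrow> condD (set (drop i s)) (s ! i)"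
      by (rule endAP_condD) (use R(2) c i in auto)
    moreover have "condD (set (drop i s)) (s ! i) \<longleftrightarrow> Cth (Suc i)"
    proof -
      have "D (Suc i) = Delta (set (drop i s))" using Dv[of "Suc i"] i Xs by simp
      moreover have "D (Suc i + 1) = Delta (set (drop i s) - {s ! i})" using Dv[of "Suc (Suc i)"] i Xs R(1) by simp
      moreover have "card (set (drop i s)) - 1 = n - Suc i" "card (set (drop i s)) - 2 = n - Suc i - 1" using c by auto
      ultimately show ?thesis unfolding condD_def Cth_def by simp
    qed
    ultimately show "ch (set (drop i s)) (s ! i) = (if Cth (Suc i) then 2 else 1)" by simp
  qed
  have last: "ch (set (drop (n - 1) s)) (s ! (n - 1)) = 1"
  proof -
    have iN: "n - 1 < length s" using assms(1) sp(1) by simp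
    note R = set_drop_remove[OF sp(2) iN]
    have c: "card (set (drop (n - 1) s)) = 1" using cX[of "n - 1"] assms(1) by simp
    have "\<not> endAP (set (drop (n - 1) s)) (s ! (n - 1))" using endAP_card c by fastforce
    then show ?thesis using ch_val R(2) by simp
  qed
  have nn: "n = Suc (n - 1)" using assms(1) by simp
  have "(\<Prod>i<n. ch (set (drop i s)) (s ! i)) = (\<Prod>i<n - 1. ch (set (drop i s)) (s ! i)) * ch (set (drop (n - 1) s)) (s ! (n - 1))"
    by (subst nn) (simp only: prod.lessThan_Suc diff_Suc_1)
  also have "\<dots> = (\<Prod>i<n - 1. if Cth (Suc i) then 2 else 1)" using chv last by simp
  also have "\<dots> = 2 ^ card {i \<in> {..<n - 1}. Cth (Suc i)}" by (rule prod_if_pow) simp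
  also have "card {i \<in> {..<n - 1}. Cth (Suc i)} = card {i \<in> {1..n-1}. Cth i}"
  proof -
    have "{i \<in> {1..n-1}. Cth i} = Suc ` {i \<in> {..<n - 1}. Cth (Suc i)}"
    proof
      show "{i \<in> {1..n-1}. Cth i} \<subseteq> Suc ` {i \<in> {..<n - 1}. Cth (Suc i)}"
      proof
        fix i assume "i \<in> {i \<in> {1..n-1}. Cth i}"
        then have i: "1 \<le> i" "i \<le> n - 1" "Cth i" by auto
        then show "i \<in> Suc ` {i \<in> {..<n - 1}. Cth (Suc i)}" by (intro image_eqI[of _ _ "i - 1"]) auto
      qed
      show "Suc ` {i \<in> {..<n - 1}. Cth (Suc i)} \<subseteq> {i \<in> {1..n-1}. Cth i}" by auto
    qed
    then show ?thesis by (simp add: card_image)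
  qed
  finally have "(\<Prod>i<n. ch (set (drop i s)) (s ! i)) = 2 ^ card {i \<in> {1..n-1}. Cth i}" .
  then show ?thesis using c1 c2 unfolding Cth_def by simp
qed

end
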